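(* Let $(x_n)_{n\in\mathbb{N}}$ be a sequence in $[0,1)$ with the following property: there exist a constant $\kappa>0$, a strictly increasing sequence $N_1<N_2<\ldots$ of positive integers, and for each $i\ge1$ an $LS$-sequence of points $(y^{(i)}_n)_{n\in\mathbb{N}}$ such that $$\left|\{x_1,\ldots,x_{N_i}\}\cap\{y^{(i)}_1,\ldots,y^{(i)}_{N_i}\}\right|\ge \kappa N_i.$$ Then $(x_n)_{n\in\mathbb{N}}$ does not have Poissonian pair correlations.
   Context: $\|x\|$ denotes the distance from $x$ to the nearest integer. A sequence $(x_n)_{n\in\mathbb{N}}$ in $[0,1)$ has Poissonian pair correlations if for every $s \geq 0$, $F_N(s) := \frac{1}{N}\#\{1 \leq l \neq m \leq N : \|x_l - x_m\| \leq s/N\} \to 2s$ as $N\to\infty$. $LS$-sequences: Let $L\in\mathbb{N}$, $S\in\mathbb{N}_0$ with $L+S\ge 2$, and let $\beta\in(0,1)$ be the solution of $L\beta+S\beta^2=1$. Let $\rho_{L,S}$ be the partition of $[0,1)$ into $L+S$ consecutive intervals, the first $L$ of length $\beta$ and the following $S$ of length $\beta^2$. For a partition $\pi$ of $[0,1)$, its $\rho$-refinement $\rho\pi$ is obtained by subdividing every interval of maximal length of $\pi$ positively homothetically to $\rho$. The $LS$-sequence of partitions is $(\rho_{L,S}^n\pi)_{n\in\mathbb{N}}$ with $\pi=\{[0,1)\}$; $\rho_{L,S}^n\pi$ consists of $t_n$ intervals, of which $l_n$ have the maximal length $\beta^n$. The $LS$-sequence of points: $\Lambda^1_{L,S}$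 is the list of the $t_1$ left endpoints of $\rho_{L,S}\pi$ ordered by magnitude; given $\Lambda^n_{L,S}=\{\xi^1,\ldots,\xi^{t_n}\}$ (ordered), $\Lambda^{n+1}_{L,S}$ is $\xi^1,\ldots,\xi^{t_n}$, followed by $\psi^{n+1}_{1,0}(\xi^1),\ldots,\psi^{n+1}_{1,0}(\xi^{l_n}),\ldots,\psi^{n+1}_{L,0}(\xi^1),\ldots,\psi^{n+1}_{L,0}(\xi^{l_n})$, followed by $\psi^{n+1}_{L,1}(\xi^1),\ldots,\psi^{n+1}_{L,1}(\xi^{l_n}),\ldots,\psi^{n+1}_{L,S-1}(\xi^1),\ldots,\psi^{n+1}_{L,S-1}(\xi^{l_n})$, where $\psi^n_{i,j}(x)=x+i\beta^n+j\beta^{n+1}$. An $LS$-sequence of points is the sequence whose first $t_n$ terms are $\Lambda^n_{L,S}$ for all $n$. *)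

theory Defs
  imports Complex_Main
begin

definition dist_int :: "real \<Rightarrow> real" where
  "dist_int x = min (x - real_of_int \<lfloor>x\<rfloor>) (real_of_int \<lceil>x\<rceil> - x)"

text \<open>Pair correlation function (sequences are indexed from 1, as in the paper).\<close>
definition pair_corr :: "(nat \<Rightarrow> real) \<Rightarrow> real \<Rightarrow> nat \<Rightarrow> real" where
  "pair_corr x s N = real (card {(l, m). l \<in> {1..N} \<and> m \<in> {1..N} \<and> l \<noteq> m \<and>
        dist_int (x l - x m) \<le> s / real N}) / real N"

definition poissonian_pair_corr :: "(nat \<Rightarrow> real) \<Rightarrow> bool" where
  "poissonian_pair_corr x \<longleftrightarrow> (\<forall>s\<ge>0. (\<lambda>N. pair_corr x s N) \<longlonglongrightarrow> 2 * s)"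

definition LS_beta :: "nat \<Rightarrow> nat \<Rightarrow> real" where
  "LS_beta L S = (THE b. 0 < b \<and> b < 1 \<and> real L * b + real S * b ^ 2 = 1)"

text \<open>Partitions of [0,1) as lists of intervals, each given by (left endpoint, length),
  listed in increasing order. The rho-refinement subdivides each interval of maximal
  length positively homothetically to rho_{L,S}.\<close>
definition max_len :: "(real \<times> real) list \<Rightarrow> real" where
  "max_len P = Max (set (map snd P))"

definition LS_refine :: "nat \<Rightarrow> nat \<Rightarrow> (real \<times> real) list \<Rightarrow> (real \<times> real) list" where
  "LS_refine L S P =
     (let b = LS_beta L S; m = max_len P in
      concat (map (\<lambda>(a, d). if d = m then
          map (\<lambda>i. (a + real i * b * d, b * d)) [0..<L]
          @ map (\<lambda>j. (a + real L * b * d + real j * b ^ 2 * d, b ^ 2 * d)) [0..<S]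
        else [(a, d)]) P))"

fun LS_partition :: "nat \<Rightarrow> nat \<Rightarrow> nat \<Rightarrow> (real \<times> real) list" where
  "LS_partition L S 0 = [(0, 1)]"
| "LS_partition L S (Suc n) = LS_refine L S (LS_partition L S n)"

definition LS_t :: "nat \<Rightarrow> nat \<Rightarrow> nat \<Rightarrow> nat" where
  "LS_t L S n = length (LS_partition L S n)"

definition LS_l :: "nat \<Rightarrow> nat \<Rightarrow> nat \<Rightarrow> nat" where
  "LS_l L S n = length (filter (\<lambda>(a, d). d = max_len (LS_partition L S n)) (LS_partition L S n))"

definition LS_psi :: "nat \<Rightarrow> nat \<Rightarrow> nat \<Rightarrow> nat \<Rightarrow> nat \<Rightarrow> real \<Rightarrow> real" where
  "LS_psi L S n i j x = x + real i * LS_beta L S ^ n + real j * LS_beta L S ^ (n + 1)"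

text \<open>Lambda^n_{L,S} (meaningful for n >= 1). The new points in step n+1 are
  psi_{i,0} for i = 1..L-1 and psi_{L,j} for j = 0..S-1, applied to the first l_n
  points of Lambda^n (for S >= 1 this is the same as psi_{i,0}, i=1..L, followed by
  psi_{L,j}, j=1..S-1).\<close>
fun LS_Lambda :: "nat \<Rightarrow> nat \<Rightarrow> nat \<Rightarrow> real list" where
  "LS_Lambda L S 0 = []"
| "LS_Lambda L S (Suc n) =
     (if n = 0 then sort (map fst (LS_partition L S 1))
      else (let \<Lambda> = LS_Lambda L S n; \<xi>s = take (LS_l L S n) \<Lambda> in
        \<Lambda>
        @ concat (map (\<lambda>i. map (LS_psi L S (Suc n) i 0) \<xi>s) [1..<L])
        @ concat (map (\<lambda>j. map (LS_psi L S (Suc n) L j) \<xi>s) [0..<S])))"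

definition is_LS_sequence :: "(nat \<Rightarrow> real) \<Rightarrow> bool" where
  "is_LS_sequence y \<longleftrightarrow> (\<exists>L S. L \<ge> 1 \<and> L + S \<ge> 2 \<and>
      (\<forall>n\<ge>1. \<forall>k < LS_t L S n. y (k + 1) = LS_Lambda L S n ! k))"

end

theory Submission
  imports Defs "HOL-Library.FuncSet"
begin

lemma beta_props:
  assumes L1: "1 \<le> L" and LS2: "2 \<le> L + S"
  shows "0 < LS_beta L S \<and> LS_beta L S < 1 \<and> real L * LS_beta L S + real S * LS_beta L S ^ 2 = 1"
proof -
  define f where "f = (\<lambda>b::real. real L * b + real S * b ^ 2)"
  have cont: "continuous_on {0..1} f" unfolding f_def by (intro continuous_intros)
  have f0: "f 0 \<le> 1" by (simp add: f_def)
  have f1: "1 \<le> f 1" using LS2 by (simp add: f_def)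
  obtain b where b: "0 \<le> b" "b \<le> 1" "f b = 1" using IVT'[of f 0 1 1, OF f0 f1 _ cont] by auto
  have "f 0 = 0" by (simp add: f_def)
  then have b0: "b \<noteq> 0" using b(3) by auto
  have b1: "b \<noteq> 1"
  proof
    assume "b = 1"
    then have "real L + real S = 1" using b(3) by (simp add: f_def)
    with LS2 show False by linarith
  qed
  have P: "0 < b \<and> b < 1 \<and> real L * b + real S * b ^ 2 = 1" using b b0 b1 by (auto simp: f_def)
  have mono: "real L * c + real S * c ^ 2 < real L * c' + real S * c' ^ 2"
    if "0 < c" "c < c'" for c c' :: real
  proof -
    have "real L * c < real L * c'" using L1 that by simp
    moreover have "real S * c ^ 2 \<le> real S * c' ^ 2"
      using that by (intro mult_left_mono power_mono) auto
    ultimately show ?thesis by linarith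
  qed
  have uniq: "c = b" if "0 < c \<and> c < 1 \<and> real L * c + real S * c ^ 2 = 1" for c
  proof (rule ccontr)
    assume "c \<noteq> b"
    then have "c < b \<or> b < c" by linarith
    then show False
    proof
      assume "c < b" then show False using mono[of c b] that P by linarith
    next
      assume "b < c" then show False using mono[of b c] that P by linarith
    qed
  qed
  have "LS_beta L S = b" unfolding LS_beta_def
    by (rule the_equality) (use P uniq in blast)+
  then show ?thesis using P by simp
qed

fun chain :: "real \<Rightarrow> (real \<times> real) list \<Rightarrow> real \<Rightarrow> bool" where
  "chain a [] b = (a = b)"
| "chain a (c # P) b = (fst c = a \<and> snd c > 0 \<and> chain (a + snd c) P b)"

lemma chain_append: "chain a (P @ Q) b \<longleftrightarrow> (\<exists>m. chain a P m \<and> chain m Q b)"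
  by (induction P arbitrary: a) auto

lemma chain_concat_map:
  assumes "chain a P b" "\<And>c. c \<in> set P \<Longrightarrow> chain (fst c) (f c) (fst c + snd c)"
  shows "chain a (concat (map f P)) b"
  using assms
proof (induction P arbitrary: a)
  case Nil then show ?case by simp
next
  case (Cons c P)
  have fc: "fst c = a" and ch: "chain (a + snd c) P b" using Cons.prems(1) by auto
  have "chain (fst c) (f c) (fst c + snd c)" using Cons.prems(2)[of c] by simp
  then have A: "chain a (f c) (a + snd c)" using fc by simp
  have "\<And>c'. c' \<in> set P \<Longrightarrow> chain (fst c') (f c') (fst c' + snd c')"
    using Cons.prems(2) by simp
  note B = Cons.IH[OF ch this]
  show ?case using A B chain_append[of a "f c" "concat (map f P)" b] by auto
qed

lemma chain_le: "chain a P b \<Longrightarrow> a \<le> b"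
  by (induction P arbitrary: a) (auto, fastforce)

lemma chain_bounds: "chain a P b \<Longrightarrow> c \<in> set P \<Longrightarrow> a \<le> fst c \<and> fst c + snd c \<le> b \<and> 0 < snd c"
proof (induction P arbitrary: a)
  case Nil then show ?case by simp
next
  case (Cons c' P)
  show ?case
  proof (cases "c = c'")
    case True then show ?thesis using Cons.prems chain_le[of "a + snd c'" P b] by auto
  next
    case False
    then have "c \<in> set P" using Cons.prems by simp
    then show ?thesis using Cons.IH[of "a + snd c'"] Cons.prems by fastforce
  qed
qed

lemma chain_disj:
  assumes "chain a P b" "c \<in> set P" "c' \<in> set P"
    "fst c \<le> p" "p < fst c + snd c" "fst c' \<le> p" "p < fst c' + snd c'"
  shows "c = c'"
  using assms
proof (induction P arbitrary: a)
  case Nil then show ?case by simp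
next
  case (Cons d P)
  have ch: "chain (a + snd d) P b" and fd: "fst d = a" using Cons.prems by auto
  show ?case
  proof (cases "c = d")
    case True
    show ?thesis
    proof (rule ccontr)
      assume "c \<noteq> c'"
      then have "c' \<in> set P" using True Cons.prems by auto
      then have "a + snd d \<le> fst c'" using chain_bounds[OF ch] by auto
      then show False using Cons.prems True fd by auto
    qed
  next
    case False
    then have cP: "c \<in> set P" using Cons.prems by auto
    have "a + snd d \<le> fst c" using chain_bounds[OF ch cP] by auto
    show ?thesis
    proof (cases "c' = d")
      case True
      then show ?thesis using \<open>a + snd d \<le> fst c\<close> Cons.prems fd by auto
    next
      case False
      then have "c' \<in> set P" using Cons.prems by auto
      then show ?thesis using Cons.IH[OF ch cP] Cons.prems by auto
    qed
  qed
qed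

lemma chain_next:
  assumes "chain a P b" "c \<in> set P"
  shows "fst c + snd c = b \<or> (\<exists>c' \<in> set P. fst c' = fst c + snd c)"
  using assms
proof (induction P arbitrary: a)
  case Nil then show ?case by simp
next
  case (Cons d P)
  show ?case
  proof (cases "c = d")
    case True
    then show ?thesis using Cons.prems by (cases P) auto
  next
    case False
    then show ?thesis using Cons by auto
  qed
qed

lemma chain_grid:
  assumes "u > 0"
  shows "chain c (map (\<lambda>i. (c + real i * u, u)) [0..<k]) (c + real k * u)"
proof (induction k)
  case 0 then show ?case by simp
next
  case (Suc k)
  then show ?case using assms by (auto simp: chain_append algebra_simps)
qed

lemma chain_grid2:
  assumes "v * w > 0"
  shows "chain c (map (\<lambda>i. (c + real i * v * w, v * w)) [0..<k]) (c + real k * v * w)"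
proof (induction k)
  case 0 then show ?case by simp
next
  case (Suc k)
  then show ?case using assms by (auto simp: chain_append algebra_simps)
qed

definition pcs :: "nat \<Rightarrow> nat \<Rightarrow> real \<Rightarrow> real \<Rightarrow> real \<Rightarrow> (real \<times> real) list" where
  "pcs L S b a d = map (\<lambda>i. (a + real i * b * d, b * d)) [0..<L]
          @ map (\<lambda>j. (a + real L * b * d + real j * b ^ 2 * d, b ^ 2 * d)) [0..<S]"

locale LSloc =
  fixes L S :: nat
  assumes L1: "1 \<le> L" and LS2: "2 \<le> L + S"
begin

definition bt :: real where "bt = LS_beta L S"

lemma bt: "0 < bt" "bt < 1" "real L * bt + real S * bt ^ 2 = 1"
  using beta_props[OF L1 LS2] unfolding bt_def by auto

lemma bt_pow_pos: "0 < bt ^ n" using bt by simp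

lemma bt_pow_less: "bt ^ Suc n < bt ^ n"
  using bt by simp

lemma bt_pow_neq: "bt ^ Suc n \<noteq> bt ^ n"
  using bt_pow_less[of n] by linarith

definition off :: "nat \<Rightarrow> nat \<Rightarrow> real" where
  "off n k = real (min k L) * bt ^ Suc n + real (k - L) * bt ^ Suc (Suc n)"

lemma off_0[simp]: "off n 0 = 0" by (simp add: off_def)

lemma off_step: "off n (Suc k) - off n k = (if k < L then bt ^ Suc n else bt ^ Suc (Suc n))"
proof (cases "k < L")
  case True
  then have "min (Suc k) L = Suc k" "min k L = k" "Suc k - L = 0" "k - L = 0" by auto
  then show ?thesis using True by (simp add: off_def algebra_simps)
next
  case False
  then have "min (Suc k) L = L" "min k L = L" "Suc k - L = Suc (k - L)" by auto
  then show ?thesis using False by (simp add: off_def algebra_simps)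
qed

lemma off_step_pos: "off n k < off n (Suc k)"
  using off_step[of n k] bt_pow_pos[of "Suc n"] bt_pow_pos[of "Suc (Suc n)"]
  by (cases "k < L") auto

lemma off_mono: "k < k' \<Longrightarrow> off n k < off n k'"
proof (induction k' arbitrary: k)
  case 0 then show ?case by simp
next
  case (Suc k')
  show ?case
  proof (cases "k = k'")
    case True then show ?thesis using off_step_pos[of n k'] by simp
  next
    case False then have "k < k'" using Suc.prems by simp
    then show ?thesis using Suc.IH[of k] off_step_pos[of n k'] by linarith
  qed
qed

lemma off_mono_le: "k \<le> k' \<Longrightarrow> off n k \<le> off n k'"
  using off_mono[of k k' n] by (cases "k = k'") auto

lemma off_nonneg: "0 \<le> off n k" using off_mono_le[of 0 k n] by simp

lemma off_top: "off n (L + S) = bt ^ n"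
proof -
  have "off n (L + S) = bt ^ n * (real L * bt + real S * bt ^ 2)"
    by (simp add: off_def algebra_simps power2_eq_square)
  then show ?thesis using bt(3) by simp
qed

lemma off_lt: "k < L + S \<Longrightarrow> off n k < bt ^ n"
  using off_mono[of k "L+S" n] off_top by simp

lemma off_i: "i \<le> L \<Longrightarrow> off n i = real i * bt ^ Suc n"
  by (simp add: off_def)

lemma off_Lj: "off n (L + j) = real L * bt ^ Suc n + real j * bt ^ Suc (Suc n)"
  by (simp add: off_def)

definition Fc :: "nat \<Rightarrow> real \<times> real \<Rightarrow> (real \<times> real) list" where
  "Fc n = (\<lambda>(a, d). if d = bt ^ n then pcs L S bt a d else [(a, d)])"

definition Inv :: "nat \<Rightarrow> bool" where
  "Inv n \<longleftrightarrow> chain 0 (LS_partition L S n) 1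
     \<and> (\<forall>c \<in> set (LS_partition L S n). snd c = bt ^ n \<or> snd c = bt ^ Suc n)
     \<and> (\<exists>c \<in> set (LS_partition L S n). snd c = bt ^ n)"

lemma max_len_eq:
  assumes "\<forall>c \<in> set P. snd c = bt ^ n \<or> snd c = bt ^ Suc n" "\<exists>c \<in> set P. snd c = bt ^ n"
  shows "max_len P = bt ^ n"
  unfolding max_len_def
proof (rule Max_eqI)
  show "finite (set (map snd P))" by simp
  show "y \<le> bt ^ n" if "y \<in> set (map snd P)" for y
    using that assms(1) bt_pow_less[of n] by auto
  show "bt ^ n \<in> set (map snd P)" using assms(2) by force
qed

lemma refine_eq:
  assumes "max_len P = bt ^ n"
  shows "LS_refine L S P = concat (map (Fc n) P)"
  unfolding LS_refine_def Let_def assms bt_def[symmetric] Fc_def pcs_def by simp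

lemma chain_pcs:
  assumes "d > 0"
  shows "chain a (pcs L S bt a d) (a + d)"
proof -
  have c1: "chain a (map (\<lambda>i. (a + real i * bt * d, bt * d)) [0..<L]) (a + real L * bt * d)"
    using chain_grid2[of bt d a L] bt assms by simp
  have c2: "chain (a + real L * bt * d) (map (\<lambda>j. (a + real L * bt * d + real j * bt ^ 2 * d, bt ^ 2 * d)) [0..<S])
      (a + real L * bt * d + real S * bt ^ 2 * d)"
    using chain_grid2[of "bt^2" d "a + real L * bt * d" S] bt assms by simp
  have "a + real L * bt * d + real S * bt ^ 2 * d = a + d * (real L * bt + real S * bt ^ 2)"
    by (simp add: algebra_simps)
  also have "\<dots> = a + d" using bt(3) by simp
  finally have eq: "a + real L * bt * d + real S * bt ^ 2 * d = a + d" .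
  show ?thesis unfolding pcs_def chain_append
    by (rule exI[of _ "a + real L * bt * d"]) (use c1 c2 eq in simp)
qed

lemma set_pcs:
  "set (pcs L S bt a (bt ^ n)) =
     (\<lambda>k. (a + off n k, bt ^ Suc n)) ` {..<L} \<union> (\<lambda>k. (a + off n k, bt ^ Suc (Suc n))) ` {L..<L+S}"
proof -
  have A: "set (map (\<lambda>i. (a + real i * bt * bt ^ n, bt * bt ^ n)) [0..<L]) = (\<lambda>k. (a + off n k, bt ^ Suc n)) ` {..<L}"
    by (auto simp: off_i algebra_simps image_iff)
  have B1: "(\<lambda>j. (a + real L * bt * bt ^ n + real j * bt ^ 2 * bt ^ n, bt ^ 2 * bt ^ n)) = (\<lambda>j. (a + off n (L + j), bt ^ Suc (Suc n)))"
    by (auto simp: off_def algebra_simps power2_eq_square)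
  have B2: "(\<lambda>j. (a + off n (L + j), bt ^ Suc (Suc n))) ` {0..<S} = (\<lambda>k. (a + off n k, bt ^ Suc (Suc n))) ` {L..<L+S}"
  proof -
    have "(\<lambda>j. (a + off n (L + j), bt ^ Suc (Suc n))) ` {0..<S}
        = (\<lambda>k. (a + off n k, bt ^ Suc (Suc n))) ` ((\<lambda>j. L + j) ` {0..<S})"
      by (simp only: image_image)
    also have "(\<lambda>j. L + j) ` {0..<S} = {L..<L+S}" by (simp add: add.commute)
    finally show ?thesis .
  qed
  show ?thesis unfolding pcs_def set_append using A B1 B2 by (simp add: atLeast0LessThan)
qed

lemma Inv_step:
  assumes "Inv n"
  shows "Inv (Suc n)"
proof -
  let ?P = "LS_partition L S n"
  have ml: "max_len ?P = bt ^ n" using assms max_len_eq unfolding Inv_def by auto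
  have PS: "LS_partition L S (Suc n) = concat (map (Fc n) ?P)" using refine_eq[OF ml] by simp
  have ch: "chain 0 (concat (map (Fc n) ?P)) 1"
  proof (rule chain_concat_map)
    show "chain 0 ?P 1" using assms unfolding Inv_def by auto
    fix c assume "c \<in> set ?P"
    then have pos: "snd c > 0" using chain_bounds assms unfolding Inv_def by blast
    obtain a d where c: "c = (a, d)" by force
    show "chain (fst c) (Fc n c) (fst c + snd c)"
      using chain_pcs[of d a] pos by (auto simp: c Fc_def)
  qed
  have lens: "\<forall>c \<in> set (concat (map (Fc n) ?P)). snd c = bt ^ Suc n \<or> snd c = bt ^ Suc (Suc n)"
  proof
    fix c assume "c \<in> set (concat (map (Fc n) ?P))"
    then obtain a d where ad: "(a, d) \<in> set ?P" "c \<in> set (Fc n (a, d))" by auto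
    show "snd c = bt ^ Suc n \<or> snd c = bt ^ Suc (Suc n)"
    proof (cases "d = bt ^ n")
      case True
      then show ?thesis using ad(2) by (auto simp: Fc_def set_pcs)
    next
      case False
      then have "d = bt ^ Suc n" using ad(1) assms unfolding Inv_def by force
      then show ?thesis using ad(2) False by (auto simp: Fc_def)
    qed
  qed
  obtain c0 where c0: "c0 \<in> set ?P" "snd c0 = bt ^ n" using assms unfolding Inv_def by auto
  obtain a0 d0 where c0': "c0 = (a0, d0)" by force
  have "(a0 + off n 0, bt ^ Suc n) \<in> (\<lambda>k. (a0 + off n k, bt ^ Suc n)) ` {..<L}"
    using L1 by (intro imageI) auto
  moreover have "set (Fc n c0) = set (pcs L S bt a0 (bt ^ n))"
    using c0 by (simp add: c0' Fc_def)
  ultimately have "(a0 + off n 0, bt ^ Suc n) \<in> set (Fc n c0)"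
    unfolding set_pcs by blast
  then have ex: "\<exists>c \<in> set (concat (map (Fc n) ?P)). snd c = bt ^ Suc n"
    using c0 by force
  show ?thesis unfolding Inv_def PS using ch lens ex by auto
qed

lemma Inv_0: "Inv 0"
  unfolding Inv_def by simp

lemma Inv_all: "Inv n"
  by (induction n) (auto intro: Inv_step Inv_0)

end

context LSloc begin

fun Lam :: "nat \<Rightarrow> real list" where
  "Lam 0 = [0]"
| "Lam (Suc n) = (let \<Lambda> = Lam n; \<xi>s = take (LS_l L S n) \<Lambda> in
        \<Lambda>
        @ concat (map (\<lambda>i. map (LS_psi L S (Suc n) i 0) \<xi>s) [1..<L])
        @ concat (map (\<lambda>j. map (LS_psi L S (Suc n) L j) \<xi>s) [0..<S]))"

lemma P_Suc: "LS_partition L S (Suc n) = concat (map (Fc n) (LS_partition L S n))"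
proof -
  have "max_len (LS_partition L S n) = bt ^ n" using Inv_all[of n] max_len_eq unfolding Inv_def by auto
  then show ?thesis using refine_eq by simp
qed

lemma l_eq: "LS_l L S n = length (filter (\<lambda>c. snd c = bt ^ n) (LS_partition L S n))"
proof -
  have "max_len (LS_partition L S n) = bt ^ n" using Inv_all[of n] max_len_eq unfolding Inv_def by auto
  moreover have "(\<lambda>(a, d). d = bt ^ n) = (\<lambda>c. snd c = bt ^ (n::nat))" by auto
  ultimately show ?thesis unfolding LS_l_def by (simp add: split_def)
qed

lemma len_Fc_max: "length (Fc n (a, bt ^ n)) = L + S"
  by (simp add: Fc_def pcs_def)

lemma lenmax_Fc_max: "length (filter (\<lambda>c. snd c = bt ^ Suc n) (Fc n (a, bt ^ n))) = L"
proof -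
  have ne: "bt ^ 2 * bt ^ n \<noteq> bt ^ Suc n"
    using bt_pow_neq[of "Suc n"] by (simp add: power2_eq_square)
  have "filter (\<lambda>c. snd c = bt ^ Suc n) (map (\<lambda>j. (a + real L * bt * bt ^ n + real j * bt ^ 2 * bt ^ n, bt ^ 2 * bt ^ n)) [0..<S]) = []"
    using ne by (simp add: filter_empty_conv)
  moreover have "filter (\<lambda>c. snd c = bt ^ Suc n) (map (\<lambda>i. (a + real i * bt * bt ^ n, bt * bt ^ n)) [0..<L])
     = map (\<lambda>i. (a + real i * bt * bt ^ n, bt * bt ^ n)) [0..<L]"
    by (simp add: filter_id_conv)
  ultimately show ?thesis by (simp add: Fc_def pcs_def del: power_Suc) 
qed

lemma len_concat_Fc:
  assumes "\<forall>c \<in> set P. snd c = bt ^ n \<or> snd c = bt ^ Suc n"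
  shows "length (concat (map (Fc n) P)) = length P + (L + S - 1) * length (filter (\<lambda>c. snd c = bt ^ n) P)"
  using assms
proof (induction P)
  case Nil then show ?case by simp
next
  case (Cons c P)
  obtain a d where c: "c = (a, d)" by force
  show ?case
  proof (cases "d = bt ^ n")
    case True
    then show ?thesis using Cons len_Fc_max[of n a] LS2 by (simp add: c del: power_Suc)
  next
    case False
    then show ?thesis using Cons by (simp add: c Fc_def del: power_Suc)
  qed
qed

lemma lenmax_concat_Fc:
  assumes "\<forall>c \<in> set P. snd c = bt ^ n \<or> snd c = bt ^ Suc n"
  shows "length (filter (\<lambda>c. snd c = bt ^ Suc n) (concat (map (Fc n) P)))
     = length P + (L - 1) * length (filter (\<lambda>c. snd c = bt ^ n) P)"
  using assms
proof (induction P)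
  case Nil then show ?case by simp
next
  case (Cons c P)
  obtain a d where c: "c = (a, d)" by force
  have IH: "length (filter (\<lambda>c. snd c = bt ^ Suc n) (concat (map (Fc n) P)))
     = length P + (L - 1) * length (filter (\<lambda>c. snd c = bt ^ n) P)" using Cons by simp
  show ?case
  proof (cases "d = bt ^ n")
    case True
    have "length (filter (\<lambda>c. snd c = bt ^ Suc n) (concat (map (Fc n) (c # P))))
       = L + length (filter (\<lambda>c. snd c = bt ^ Suc n) (concat (map (Fc n) P)))"
      using lenmax_Fc_max[of n a] True by (simp add: c del: power_Suc)
    then show ?thesis using IH True L1 by (simp add: c del: power_Suc)
  next
    case False
    then have "d = bt ^ Suc n" using Cons.prems c by auto
    then have "length (filter (\<lambda>c. snd c = bt ^ Suc n) (concat (map (Fc n) (c # P))))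
       = 1 + length (filter (\<lambda>c. snd c = bt ^ Suc n) (concat (map (Fc n) P)))"
      using False by (simp add: c Fc_def del: power_Suc)
    then show ?thesis using IH False by (simp add: c del: power_Suc)
  qed
qed

lemma mem_Fc:
  "(a', d') \<in> set (concat (map (Fc n) P)) \<longleftrightarrow>
     (\<exists>a d. (a, d) \<in> set P \<and>
        ((d = bt ^ n \<and> ((\<exists>k<L. a' = a + off n k \<and> d' = bt ^ Suc n)
                       \<or> (\<exists>k\<in>{L..<L+S}. a' = a + off n k \<and> d' = bt ^ Suc (Suc n))))
         \<or> (d \<noteq> bt ^ n \<and> a' = a \<and> d' = d)))"
proof -
  have "(a', d') \<in> set (Fc n (a, d)) \<longleftrightarrow>
        ((d = bt ^ n \<and> ((\<exists>k<L. a' = a + off n k \<and> d' = bt ^ Suc n)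
                       \<or> (\<exists>k\<in>{L..<L+S}. a' = a + off n k \<and> d' = bt ^ Suc (Suc n))))
         \<or> (d \<noteq> bt ^ n \<and> a' = a \<and> d' = d))" (is "_ \<longleftrightarrow> ?R a d") for a d
  proof (cases "d = bt ^ n")
    case True
    then have "set (Fc n (a, d)) = (\<lambda>k. (a + off n k, bt ^ Suc n)) ` {..<L} \<union> (\<lambda>k. (a + off n k, bt ^ Suc (Suc n))) ` {L..<L+S}"
      unfolding Fc_def using set_pcs[of a n] by (simp del: power_Suc)
    then show ?thesis using True by (simp del: power_Suc add: image_iff) blast
  next
    case False
    then show ?thesis by (simp add: Fc_def)
  qed
  note cell = this
  have "(a', d') \<in> set (concat (map (Fc n) P)) \<longleftrightarrow> (\<exists>a d. (a, d) \<in> set P \<and> (a', d') \<in> set (Fc n (a, d)))"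
    by auto
  also have "\<dots> \<longleftrightarrow> (\<exists>a d. (a, d) \<in> set P \<and> ?R a d)"
    by (simp only: cell)
  finally show ?thesis .
qed

end

context LSloc begin

lemma Inv_lens: "c \<in> set (LS_partition L S n) \<Longrightarrow> snd c = bt ^ n \<or> snd c = bt ^ Suc n"
  using Inv_all[of n] unfolding Inv_def by auto

lemma fst_P_Suc:
  "fst ` set (LS_partition L S (Suc n)) = fst ` set (LS_partition L S n)
     \<union> {a + off n k | a k. (a, bt ^ n) \<in> set (LS_partition L S n) \<and> 1 \<le> k \<and> k < L + S}"
  (is "?A = ?B \<union> ?C")
proof
  show "?A \<subseteq> ?B \<union> ?C"
  proof
    fix x assume "x \<in> ?A"
    then obtain d' where "(x, d') \<in> set (concat (map (Fc n) (LS_partition L S n)))"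
      unfolding P_Suc by force
    then obtain a d where ad: "(a, d) \<in> set (LS_partition L S n)"
      and cs: "(d = bt ^ n \<and> ((\<exists>k<L. x = a + off n k \<and> d' = bt ^ Suc n)
                       \<or> (\<exists>k\<in>{L..<L+S}. x = a + off n k \<and> d' = bt ^ Suc (Suc n))))
         \<or> (d \<noteq> bt ^ n \<and> x = a \<and> d' = d)"
      unfolding mem_Fc by blast
    have aB: "a \<in> ?B" using ad by force
    show "x \<in> ?B \<union> ?C"
    proof (cases "d = bt ^ n")
      case False then show ?thesis using cs aB by auto
    next
      case True
      have "\<exists>k. k < L + S \<and> x = a + off n k"
      proof -
        have "(\<exists>k<L. x = a + off n k) \<or> (\<exists>k\<in>{L..<L+S}. x = a + off n k)" using cs True by blast
        then show ?thesis
        proof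
          assume "\<exists>k<L. x = a + off n k"
          then obtain k where "k < L" "x = a + off n k" by blast
          then show ?thesis by (intro exI[of _ k]) simp
        next
          assume "\<exists>k\<in>{L..<L+S}. x = a + off n k"
          then show ?thesis by auto
        qed
      qed
      then obtain k where k: "k < L + S" "x = a + off n k" by blast
      show ?thesis
      proof (cases "k = 0")
        case True then show ?thesis using k aB by simp
      next
        case False then have "x \<in> ?C" using k ad \<open>d = bt ^ n\<close> by force
        then show ?thesis by simp
      qed
    qed
  qed
next
  show "?B \<union> ?C \<subseteq> ?A"
  proof
    fix x assume "x \<in> ?B \<union> ?C"
    then show "x \<in> ?A"
    proof
      assume "x \<in> ?B"
      then obtain d where xd: "(x, d) \<in> set (LS_partition L S n)" by force
      show "x \<in> ?A"
      proof (cases "d = bt ^ n")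
        case True
        have "(x + off n 0, bt ^ Suc n) \<in> set (concat (map (Fc n) (LS_partition L S n)))"
          unfolding mem_Fc using xd True L1 by force
        then show ?thesis unfolding P_Suc by force
      next
        case False
        have "(x, d) \<in> set (concat (map (Fc n) (LS_partition L S n)))"
          unfolding mem_Fc using xd False by force
        then show ?thesis unfolding P_Suc by force
      qed
    next
      assume "x \<in> ?C"
      then obtain a k where ak: "x = a + off n k" "(a, bt ^ n) \<in> set (LS_partition L S n)" "1 \<le> k" "k < L + S"
        by blast
      show "x \<in> ?A"
      proof (cases "k < L")
        case True
        have "(x, bt ^ Suc n) \<in> set (concat (map (Fc n) (LS_partition L S n)))"
          unfolding mem_Fc using ak True by blast
        then show ?thesis unfolding P_Suc by force
      next
        case False
        then have "k \<in> {L..<L+S}" using ak by simp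
        then have "(x, bt ^ Suc (Suc n)) \<in> set (concat (map (Fc n) (LS_partition L S n)))"
          unfolding mem_Fc using ak by blast
        then show ?thesis unfolding P_Suc by force
      qed
    qed
  qed
qed

lemma max_P_Suc:
  "{a. (a, bt ^ Suc n) \<in> set (LS_partition L S (Suc n))} = fst ` set (LS_partition L S n)
     \<union> {a + off n k | a k. (a, bt ^ n) \<in> set (LS_partition L S n) \<and> 1 \<le> k \<and> k < L}"
  (is "?A = ?B \<union> ?C")
proof
  show "?A \<subseteq> ?B \<union> ?C"
  proof
    fix x assume "x \<in> ?A"
    then have "(x, bt ^ Suc n) \<in> set (concat (map (Fc n) (LS_partition L S n)))"
      unfolding P_Suc by force
    then obtain a d where ad: "(a, d) \<in> set (LS_partition L S n)"
      and cs: "(d = bt ^ n \<and> ((\<exists>k<L. x = a + off n k \<and> bt ^ Suc n = bt ^ Suc n)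
                       \<or> (\<exists>k\<in>{L..<L+S}. x = a + off n k \<and> bt ^ Suc n = bt ^ Suc (Suc n))))
         \<or> (d \<noteq> bt ^ n \<and> x = a \<and> bt ^ Suc n = d)"
      unfolding mem_Fc by blast
    have aB: "a \<in> ?B" using ad by force
    have ne: "bt ^ Suc n \<noteq> bt ^ Suc (Suc n)" using bt_pow_neq[of "Suc n"] by metis
    show "x \<in> ?B \<union> ?C"
    proof (cases "d = bt ^ n")
      case False then show ?thesis using cs aB by auto
    next
      case True
      then obtain k where k: "k < L" "x = a + off n k" using cs ne by auto
      show ?thesis
      proof (cases "k = 0")
        case True then show ?thesis using k aB by simp
      next
        case False then have "x \<in> ?C" using k ad \<open>d = bt ^ n\<close> by force
        then show ?thesis by simp
      qed
    qed
  qed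
next
  show "?B \<union> ?C \<subseteq> ?A"
  proof
    fix x assume "x \<in> ?B \<union> ?C"
    then show "x \<in> ?A"
    proof
      assume "x \<in> ?B"
      then obtain d where xd: "(x, d) \<in> set (LS_partition L S n)" by force
      show "x \<in> ?A"
      proof (cases "d = bt ^ n")
        case True
        have "(x + off n 0, bt ^ Suc n) \<in> set (concat (map (Fc n) (LS_partition L S n)))"
          unfolding mem_Fc using xd True L1 by force
        then show ?thesis unfolding P_Suc by simp
      next
        case False
        then have dd: "d = bt ^ Suc n" using Inv_lens[OF xd] by simp
        have "(x, d) \<in> set (concat (map (Fc n) (LS_partition L S n)))"
          unfolding mem_Fc using xd False by force
        then show ?thesis unfolding P_Suc dd by simp
      qed
    next
      assume "x \<in> ?C"
      then obtain a k where ak: "x = a + off n k" "(a, bt ^ n) \<in> set (LS_partition L S n)" "1 \<le> k" "k < L"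
        by blast
      have "(x, bt ^ Suc n) \<in> set (concat (map (Fc n) (LS_partition L S n)))"
        unfolding mem_Fc using ak by blast
      then show ?thesis unfolding P_Suc by simp
    qed
  qed
qed

end

context LSloc begin

definition gblk :: "nat \<Rightarrow> real list \<Rightarrow> nat \<Rightarrow> real list" where
  "gblk n xs k = map (\<lambda>\<xi>. \<xi> + off n k) xs"

lemma psi_i: "i \<le> L \<Longrightarrow> LS_psi L S (Suc n) i 0 \<xi> = \<xi> + off n i"
  by (simp add: LS_psi_def off_i bt_def)

lemma psi_L: "LS_psi L S (Suc n) L j \<xi> = \<xi> + off n (L + j)"
  by (simp add: LS_psi_def off_Lj bt_def)

lemma Lam_Suc': "Lam (Suc n) = Lam n @ concat (map (gblk n (take (LS_l L S n) (Lam n))) [1..<L+S])"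
proof -
  define \<xi>s where "\<xi>s = take (LS_l L S n) (Lam n)"
  have A: "map (\<lambda>i. map (LS_psi L S (Suc n) i 0) \<xi>s) [1..<L] = map (gblk n \<xi>s) [1..<L]"
    by (rule map_cong) (auto simp: gblk_def psi_i)
  have B: "map (\<lambda>j. map (LS_psi L S (Suc n) L j) \<xi>s) [0..<S] = map (gblk n \<xi>s) [L..<L+S]"
  proof -
    have "map (gblk n \<xi>s) [L..<L+S] = map (gblk n \<xi>s) (map (\<lambda>i. i + L) [0..<S])"
      by (simp add: map_add_upt add.commute)
    also have "\<dots> = map (\<lambda>j. map (LS_psi L S (Suc n) L j) \<xi>s) [0..<S]"
      by (auto simp: gblk_def psi_L add.commute)
    finally show ?thesis by simp
  qed
  have C: "[1..<L+S] = [1..<L] @ [L..<L+S]" using upt_add_eq_append[of 1 L S] L1 by simp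
  have "Lam (Suc n) = Lam n @ concat (map (\<lambda>i. map (LS_psi L S (Suc n) i 0) \<xi>s) [1..<L])
        @ concat (map (\<lambda>j. map (LS_psi L S (Suc n) L j) \<xi>s) [0..<S])"
    by (simp only: Lam.simps Let_def \<xi>s_def)
  also have "\<dots> = Lam n @ concat (map (gblk n \<xi>s) [1..<L+S])"
    by (simp only: A B C concat_append map_append append_assoc)
  finally show ?thesis unfolding \<xi>s_def .
qed

lemma len_concat_gblk: "length (concat (map (gblk n xs) ks)) = length ks * length xs"
  by (induction ks) (auto simp: gblk_def)

lemma set_concat_gblk: "set (concat (map (gblk n xs) ks)) = {\<xi> + off n k | \<xi> k. \<xi> \<in> set xs \<and> k \<in> set ks}"
  by (auto simp: gblk_def)

lemma J: "set (Lam n) = fst ` set (LS_partition L S n) \<and> length (Lam n) = length (LS_partition L S n)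
   \<and> LS_l L S n \<le> length (Lam n)
   \<and> set (take (LS_l L S n) (Lam n)) = {a. (a, bt ^ n) \<in> set (LS_partition L S n)}"
proof (induction n)
  case 0
  have "LS_l L S 0 = 1" by (simp add: l_eq)
  then show ?case by auto
next
  case (Suc n)
  define \<xi>s where "\<xi>s = take (LS_l L S n) (Lam n)"
  define l where "l = LS_l L S n"
  have len\<xi>: "length \<xi>s = l" using Suc unfolding \<xi>s_def l_def by simp
  have set\<xi>: "set \<xi>s = {a. (a, bt ^ n) \<in> set (LS_partition L S n)}" using Suc unfolding \<xi>s_def by simp
  have LS: "Lam (Suc n) = Lam n @ concat (map (gblk n \<xi>s) [1..<L+S])" using Lam_Suc' unfolding \<xi>s_def .
  have lens: "\<forall>c\<in>set (LS_partition L S n). snd c = bt ^ n \<or> snd c = bt ^ Suc n" using Inv_lens by blast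
  have lP: "length (LS_partition L S (Suc n)) = length (LS_partition L S n) + (L + S - 1) * l"
    unfolding P_Suc len_concat_Fc[OF lens] l_def l_eq ..
  have lmax: "LS_l L S (Suc n) = length (LS_partition L S n) + (L - 1) * l"
    unfolding l_eq[of "Suc n"] P_Suc lenmax_concat_Fc[OF lens] l_def l_eq ..
  have len: "length (Lam (Suc n)) = length (LS_partition L S (Suc n))"
    unfolding LS lP using Suc len\<xi> by (simp add: len_concat_gblk)
  have le: "LS_l L S (Suc n) \<le> length (Lam (Suc n))"
    unfolding len lP lmax using L1 by (intro add_left_mono mult_right_mono) auto
  have C: "[1..<L+S] = [1..<L] @ [L..<L+S]" using upt_add_eq_append[of 1 L S] L1 by simp
  have tk: "take (LS_l L S (Suc n)) (Lam (Suc n)) = Lam n @ concat (map (gblk n \<xi>s) [1..<L])"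
  proof -
    have "length (concat (map (gblk n \<xi>s) [1..<L])) = (L - 1) * l"
      by (simp add: len_concat_gblk len\<xi>)
    then show ?thesis unfolding LS lmax C using Suc by simp
  qed
  have s1: "set (Lam (Suc n)) = fst ` set (LS_partition L S (Suc n))"
    unfolding LS fst_P_Suc set_append set_concat_gblk set\<xi> using Suc by auto
  have s2: "set (take (LS_l L S (Suc n)) (Lam (Suc n))) = {a. (a, bt ^ Suc n) \<in> set (LS_partition L S (Suc n))}"
    unfolding tk max_P_Suc set_append set_concat_gblk set\<xi> using Suc by auto
  show ?case using s1 len le s2 by simp
qed

end

context LSloc begin

lemma Lam1: "Lam (Suc 0) = map (off 0) [0..<L+S]"
proof -
  have l0: "LS_l L S 0 = 1" by (simp add: l_eq)
  have "Lam (Suc 0) = [0] @ concat (map (gblk 0 [0]) [1..<L+S])"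
    using Lam_Suc'[of 0] l0 by simp
  also have "concat (map (gblk 0 [0]) [1..<L+S]) = map (off 0) [1..<L+S]"
    by (induction "L+S") (auto simp: gblk_def)
  also have "[0] @ map (off 0) [1..<L+S] = map (off 0) [0..<L+S]"
  proof -
    have "[0..<L+S] = 0 # [Suc 0..<L+S]" using LS2 upt_conv_Cons[of 0 "L+S"] by linarith
    then show ?thesis by simp
  qed
  finally show ?thesis .
qed

lemma P1fst: "map fst (LS_partition L S (Suc 0)) = map (off 0) [0..<L+S]"
proof -
  have "LS_partition L S (Suc 0) = pcs L S bt 0 1"
    unfolding P_Suc by (simp add: Fc_def)
  then have "map fst (LS_partition L S (Suc 0)) =
     map (\<lambda>i. real i * bt) [0..<L] @ map (\<lambda>j. real L * bt + real j * bt ^ 2) [0..<S]"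
    by (simp add: pcs_def)
  also have "\<dots> = map (off 0) [0..<L] @ map (off 0) [L..<L+S]"
  proof -
    have "map (\<lambda>i. real i * bt) [0..<L] = map (off 0) [0..<L]"
      by (rule map_cong) (auto simp: off_i)
    moreover have "map (off 0) [L..<L+S] = map (off 0) (map (\<lambda>i. i + L) [0..<S])"
      by (simp add: map_add_upt add.commute)
    moreover have "\<dots> = map (\<lambda>j. real L * bt + real j * bt ^ 2) [0..<S]"
      by (auto simp: off_def power2_eq_square)
    ultimately show ?thesis by simp
  qed
  also have "\<dots> = map (off 0) [0..<L+S]"
    using upt_add_eq_append[of 0 L S] by simp
  finally show ?thesis .
qed

lemma sorted_off: "sorted (map (off n) [0..<m])"
  unfolding sorted_iff_nth_mono by (auto intro: off_mono_le)

lemma LS_Lambda_eq: "LS_Lambda L S (Suc n) = Lam (Suc n)"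
proof (induction n)
  case 0
  have "LS_Lambda L S (Suc 0) = sort (map (off 0) [0..<L+S])" using P1fst by simp
  also have "\<dots> = map (off 0) [0..<L+S]" using sorted_off by (simp add: sorted_sort_id)
  finally show ?case using Lam1 by simp
next
  case (Suc n)
  then show ?case by (simp only: LS_Lambda.simps Lam.simps) simp
qed

lemma len_Lam: "length (Lam n) = LS_t L S n"
  using J[of n] by (simp add: LS_t_def)

lemma l_pos: "1 \<le> LS_l L S n"
proof -
  obtain c where "c \<in> set (LS_partition L S n)" "snd c = bt ^ n"
    using Inv_all[of n] unfolding Inv_def by auto
  then have "filter (\<lambda>c. snd c = bt ^ n) (LS_partition L S n) \<noteq> []"
    by (auto simp: filter_empty_conv)
  then show ?thesis unfolding l_eq by (simp add: Suc_le_eq)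
qed

lemma t_Suc: "LS_t L S (Suc n) = LS_t L S n + (L + S - 1) * LS_l L S n"
proof -
  have lens: "\<forall>c\<in>set (LS_partition L S n). snd c = bt ^ n \<or> snd c = bt ^ Suc n" using Inv_lens by blast
  show ?thesis unfolding LS_t_def P_Suc len_concat_Fc[OF lens] l_eq ..
qed

lemma t_strict: "LS_t L S n < LS_t L S (Suc n)"
  using t_Suc[of n] l_pos[of n] LS2 by simp

lemma t_0: "LS_t L S 0 = 1" by (simp add: LS_t_def)

lemma t_ge: "n + 1 \<le> LS_t L S n"
proof (induction n)
  case 0 then show ?case by (simp add: t_0)
next
  case (Suc n) then show ?case using t_strict[of n] by simp
qed

end

lemma set_take_map: "set (take r (map g xs)) = {g (xs ! j) | j. j < length xs \<and> j < r}"
  unfolding take_map set_map by (force simp: set_conv_nth nth_take)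

context LSloc begin

lemma take_concat_gblk:
  "set (take r (concat (map (gblk n xs) ks))) =
     {xs ! j + off n (ks ! i) | i j. i < length ks \<and> j < length xs \<and> i * length xs + j < r}"
proof (induction ks arbitrary: r)
  case Nil then show ?case by simp
next
  case (Cons k ks)
  have "set (take r (concat (map (gblk n xs) (k # ks)))) =
        set (take r (gblk n xs k)) \<union> set (take (r - length xs) (concat (map (gblk n xs) ks)))"
    by (simp add: gblk_def)
  also have "set (take r (gblk n xs k)) = {xs ! j + off n k | j. j < length xs \<and> j < r}"
    unfolding gblk_def set_take_map by simp
  also have "set (take (r - length xs) (concat (map (gblk n xs) ks))) =
     {xs ! j + off n (ks ! i) | i j. i < length ks \<and> j < length xs \<and> i * length xs + j < r - length xs}"
    by (rule Cons.IH)
  finally have eq: "set (take r (concat (map (gblk n xs) (k # ks)))) =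
     {xs ! j + off n k | j. j < length xs \<and> j < r} \<union>
     {xs ! j + off n (ks ! i) | i j. i < length ks \<and> j < length xs \<and> i * length xs + j < r - length xs}" .
  show ?case (is "?L = ?R")
  proof
    show "?L \<subseteq> ?R"
    proof
      fix y assume "y \<in> ?L"
      then have "y \<in> {xs ! j + off n k | j. j < length xs \<and> j < r} \<or>
         y \<in> {xs ! j + off n (ks ! i) | i j. i < length ks \<and> j < length xs \<and> i * length xs + j < r - length xs}"
        using eq by blast
      then show "y \<in> ?R"
      proof
        assume "y \<in> {xs ! j + off n k | j. j < length xs \<and> j < r}"
        then obtain j where "j < length xs" "j < r" "y = xs ! j + off n k" by blast
        then show ?thesis by (intro CollectI exI[of _ 0] exI[of _ j]) auto
      next
        assume "y \<in> {xs ! j + off n (ks ! i) | i j. i < length ks \<and> j < length xs \<and> i * length xs + j < r - length xs}"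
        then obtain i j where "i < length ks" "j < length xs" "i * length xs + j < r - length xs"
          "y = xs ! j + off n (ks ! i)" by blast
        then show ?thesis by (intro CollectI exI[of _ "Suc i"] exI[of _ j]) auto
      qed
    qed
  next
    show "?R \<subseteq> ?L"
    proof
      fix y assume "y \<in> ?R"
      then obtain i j where ij: "i < length (k # ks)" "j < length xs" "i * length xs + j < r"
        "y = xs ! j + off n ((k # ks) ! i)" by blast
      show "y \<in> ?L"
      proof (cases i)
        case 0
        then have "y \<in> {xs ! j + off n k | j. j < length xs \<and> j < r}" using ij by auto
        then show ?thesis using eq by blast
      next
        case (Suc i')
        then have "y \<in> {xs ! j + off n (ks ! i) | i j. i < length ks \<and> j < length xs \<and> i * length xs + j < r - length xs}"
          using ij by (intro CollectI exI[of _ i'] exI[of _ j]) auto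
        then show ?thesis using eq by blast
      qed
    qed
  qed
qed

lemma maxleft_nth:
  assumes "(a, bt ^ n) \<in> set (LS_partition L S n)"
  shows "\<exists>j < LS_l L S n. take (LS_l L S n) (Lam n) ! j = a"
proof -
  have "a \<in> set (take (LS_l L S n) (Lam n))" using J[of n] assms by simp
  then obtain j where "j < length (take (LS_l L S n) (Lam n))" "take (LS_l L S n) (Lam n) ! j = a"
    by (auto simp: in_set_conv_nth)
  then show ?thesis using J[of n] by (intro exI[of _ j]) auto
qed

definition Yset :: "nat \<Rightarrow> nat \<Rightarrow> real set" where
  "Yset n r = set (Lam n) \<union> set (take r (concat (map (gblk n (take (LS_l L S n) (Lam n))) [1..<L+S])))"

lemma Yset_mem_iff:
  "y \<in> Yset n r \<longleftrightarrow> y \<in> fst ` set (LS_partition L S n) \<or>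
     (\<exists>i j. i < L + S - 1 \<and> j < LS_l L S n \<and> i * LS_l L S n + j < r \<and>
        y = take (LS_l L S n) (Lam n) ! j + off n (Suc i))"
proof -
  have len: "length (take (LS_l L S n) (Lam n)) = LS_l L S n" using J[of n] by simp
  have K: "length [1..<L+S] = L+S-1" by simp
  have KK: "[1..<L+S] ! i = Suc i" if "i < L+S-1" for i using that by simp
  let ?xs = "take (LS_l L S n) (Lam n)"
  have "y \<in> {?xs ! j + off n ([1..<L+S] ! i) | i j. i < length [1..<L+S] \<and> j < length ?xs \<and> i * length ?xs + j < r}
     \<longleftrightarrow> (\<exists>i j. i < L + S - 1 \<and> j < LS_l L S n \<and> i * LS_l L S n + j < r \<and>
        y = ?xs ! j + off n (Suc i))" (is "?A \<longleftrightarrow> ?B")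
  proof
    assume ?A
    then obtain i j where ij: "i < length [1..<L+S]" "j < length ?xs" "i * length ?xs + j < r"
      "y = ?xs ! j + off n ([1..<L+S] ! i)" by blast
    have e: "[1..<L+S] ! i = Suc i" using KK ij(1) K by simp
    show ?B using ij e len K by (intro exI[of _ i] exI[of _ j]) simp
  next
    assume ?B
    then obtain i j where ij: "i < L + S - 1" "j < LS_l L S n" "i * LS_l L S n + j < r"
      "y = ?xs ! j + off n (Suc i)" by blast
    have e: "[1..<L+S] ! i = Suc i" using KK ij(1) by simp
    show ?A using ij e len K by (intro CollectI exI[of _ i] exI[of _ j]) simp
  qed
  then show ?thesis unfolding Yset_def take_concat_gblk using J[of n] by blast
qed

lemma Yset_rep:
  assumes "y \<in> Yset n r"
  shows "\<exists>a d k. (a, d) \<in> set (LS_partition L S n) \<and> y = a + off n k \<and> k < L + S \<and>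
     (k = 0 \<or> (d = bt ^ n \<and> 1 \<le> k \<and>
        (\<exists>j < LS_l L S n. take (LS_l L S n) (Lam n) ! j = a \<and> (k - 1) * LS_l L S n + j < r)))"
proof -
  from assms[unfolded Yset_mem_iff] show ?thesis
  proof
    assume "y \<in> fst ` set (LS_partition L S n)"
    then obtain d where "(y, d) \<in> set (LS_partition L S n)" by force
    then show ?thesis using LS2 by (intro exI[of _ y] exI[of _ d] exI[of _ 0]) auto
  next
    assume "\<exists>i j. i < L + S - 1 \<and> j < LS_l L S n \<and> i * LS_l L S n + j < r \<and>
        y = take (LS_l L S n) (Lam n) ! j + off n (Suc i)"
    then obtain i j where ij: "i < L + S - 1" "j < LS_l L S n" "i * LS_l L S n + j < r"
      "y = take (LS_l L S n) (Lam n) ! j + off n (Suc i)" by blast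
    define a where "a = take (LS_l L S n) (Lam n) ! j"
    have "a \<in> set (take (LS_l L S n) (Lam n))" using ij J[of n] unfolding a_def
      by (intro nth_mem) simp
    then have "(a, bt ^ n) \<in> set (LS_partition L S n)" using J[of n] by simp
    then have "(a, bt ^ n) \<in> set (LS_partition L S n) \<and> y = a + off n (Suc i) \<and> Suc i < L + S \<and>
     (Suc i = 0 \<or> (bt ^ n = bt ^ n \<and> 1 \<le> Suc i \<and>
        (\<exists>j < LS_l L S n. take (LS_l L S n) (Lam n) ! j = a \<and> (Suc i - 1) * LS_l L S n + j < r)))"
      using ij unfolding a_def by auto
    then show ?thesis by blast
  qed
qed

lemma Yset_in_cell:
  assumes "(a, d) \<in> set (LS_partition L S n)" "k < L + S" "k = 0 \<or> d = bt ^ n"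
  shows "a \<le> a + off n k \<and> a + off n k < a + d"
proof -
  have "0 < d" using chain_bounds[OF conjunct1[OF Inv_all[of n, unfolded Inv_def]] assms(1)] by simp
  then show ?thesis using assms off_lt[of k n] off_nonneg[of n k] by auto
qed

definition Gs :: "nat \<Rightarrow> nat \<Rightarrow> real set" where
  "Gs n D = {bt ^ Suc n, bt ^ Suc (Suc n), bt ^ n - off n D, bt ^ n - off n (Suc D)}"

lemma step_in_Gs: "off n (Suc k) - off n k \<in> Gs n D"
  using off_step[of n k] by (simp add: Gs_def del: power_Suc)

lemma gap_lemma:
  assumes r: "r \<le> (L + S - 1) * LS_l L S n"
    and p: "p \<in> Yset n r" and q: "q \<in> Yset n r" and pq: "p < q"
    and nb: "\<forall>z \<in> Yset n r. \<not> (p < z \<and> z < q)"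
  shows "q - p \<in> Gs n (r div LS_l L S n)"
proof -
  define l where "l = LS_l L S n"
  define D where "D = r div l"
  define \<xi>s where "\<xi>s = take l (Lam n)"
  have lpos: "0 < l" using l_pos[of n] unfolding l_def by simp
  have Dl: "D * l \<le> r" "r < Suc D * l"
  proof -
    have "r = D * l + r mod l" unfolding D_def by simp
    moreover have "r mod l < l" using lpos by simp
    moreover have "Suc D * l = D * l + l" by simp
    ultimately show "D * l \<le> r" "r < Suc D * l" by linarith+
  qed
  have ch: "chain 0 (LS_partition L S n) 1" using Inv_all[of n] unfolding Inv_def by simp
  obtain a d k where A: "(a, d) \<in> set (LS_partition L S n)" "p = a + off n k" "k < L + S"
     "k = 0 \<or> (d = bt ^ n \<and> 1 \<le> k \<and> (\<exists>j < l. \<xi>s ! j = a \<and> (k - 1) * l + j < r))"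
    using Yset_rep[OF p] unfolding l_def \<xi>s_def by blast
  obtain a' d' k' where A': "(a', d') \<in> set (LS_partition L S n)" "q = a' + off n k'" "k' < L + S"
     "k' = 0 \<or> (d' = bt ^ n \<and> 1 \<le> k' \<and> (\<exists>j < l. \<xi>s ! j = a' \<and> (k' - 1) * l + j < r))"
    using Yset_rep[OF q] unfolding l_def \<xi>s_def by blast
  have cp: "a \<le> p" "p < a + d" using Yset_in_cell[OF A(1) A(3)] A(2,4) by auto
  have cq: "a' \<le> q" "q < a' + d'" using Yset_in_cell[OF A'(1) A'(3)] A'(2,4) by auto
  have memY: "a0 + off n k0 \<in> Yset n r" if "(a0, bt ^ n) \<in> set (LS_partition L S n)" "1 \<le> k0" "k0 < L + S"
    "j0 < l" "\<xi>s ! j0 = a0" "(k0 - 1) * l + j0 < r" for a0 k0 j0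
  proof -
    have "\<exists>i j. i < L + S - 1 \<and> j < LS_l L S n \<and> i * LS_l L S n + j < r \<and>
        a0 + off n k0 = take (LS_l L S n) (Lam n) ! j + off n (Suc i)"
      using that unfolding l_def \<xi>s_def by (intro exI[of _ "k0 - 1"] exI[of _ j0]) auto
    then show ?thesis unfolding Yset_mem_iff by blast
  qed
  have memY0: "a0 \<in> Yset n r" if "a0 \<in> fst ` set (LS_partition L S n)" for a0
    using that unfolding Yset_mem_iff by blast
  show ?thesis unfolding D_def[symmetric] l_def[symmetric]
  proof (cases "q < a + d")
    case True
    have same: "(a, d) = (a', d')"
      using chain_disj[OF ch A(1) A'(1), of q] cp cq True pq by auto
    then have qq: "q = a + off n k'" using A'(2) by simp
    have kk: "k < k'"
    proof (rule ccontr)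
      assume "\<not> k < k'"
      then have "off n k' \<le> off n k" using off_mono_le by simp
      then show False using pq A(2) qq by simp
    qed
    then obtain j where j: "d = bt ^ n" "1 \<le> k'" "j < l" "\<xi>s ! j = a" "(k' - 1) * l + j < r"
      using A'(4) same by auto
    have k'eq: "k' = Suc k"
    proof (rule ccontr)
      assume "k' \<noteq> Suc k"
      then have lt: "Suc k < k'" using kk by simp
      have "k * l + j \<le> (k' - 1) * l + j" using lt by (intro add_right_mono mult_right_mono) auto
      then have "k * l + j < r" using j(5) by linarith
      then have "a + off n (Suc k) \<in> Yset n r"
        using memY[of a "Suc k" j] A(1) j lt A'(3) by simp
      moreover have "p < a + off n (Suc k)" using A(2) off_step_pos[of n k] by simp
      moreover have "a + off n (Suc k) < q" using qq off_mono[OF lt] by simp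
      ultimately show False using nb by blast
    qed
    show "q - p \<in> Gs n D" using qq A(2) k'eq step_in_Gs[of n k D] by simp
  next
    case False
    have qeq: "q = a + d"
    proof (cases "a + d = 1")
      case True
      have "a' + d' \<le> 1" using chain_bounds[OF ch A'(1)] by simp
      then show ?thesis using True False cq by simp
    next
      case False
      then obtain c' where "c' \<in> set (LS_partition L S n)" "fst c' = a + d"
        using chain_next[OF ch A(1)] by auto
      then have "a + d \<in> Yset n r" using memY0 by force
      then show ?thesis using nb cp \<open>\<not> q < a + d\<close> by force
    qed
    show "q - p \<in> Gs n D"
    proof (cases "d = bt ^ n")
      case False
      then have "k = 0" using A(4) by simp
      moreover have "d = bt ^ Suc n" using Inv_lens[OF A(1)] False by simp
      ultimately show ?thesis using qeq A(2) by (simp add: Gs_def del: power_Suc)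
    next
      case True
      show ?thesis
      proof (cases "k = L + S - 1")
        case True
        then have "L + S = Suc k" using LS2 by simp
        then have "q - p = off n (Suc k) - off n k" using qeq A(2) \<open>d = bt ^ n\<close> off_top[of n] by simp
        then show ?thesis using step_in_Gs by simp
      next
        case False
        then have k1: "Suc k < L + S" using A(3) by simp
        obtain j0 where j0: "j0 < l" "\<xi>s ! j0 = a"
          using maxleft_nth[of a n] A(1) True unfolding l_def \<xi>s_def by auto
        have ge: "r \<le> k * l + j0"
        proof (rule ccontr)
          assume "\<not> r \<le> k * l + j0"
          then have "a + off n (Suc k) \<in> Yset n r"
            using memY[of a "Suc k" j0] A(1) True j0 k1 by simp
          moreover have "p < a + off n (Suc k)" using A(2) off_step_pos[of n k] by simp
          moreover have "a + off n (Suc k) < q" using qeq True off_lt[OF k1, of n] by simp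
          ultimately show False using nb by blast
        qed
        have kD: "D \<le> k"
        proof (rule ccontr)
          assume "\<not> D \<le> k"
          then have "Suc k * l \<le> D * l" by (intro mult_right_mono) auto
          then show False using ge Dl j0(1) by simp
        qed
        have kD1: "k \<le> Suc D"
        proof (cases "k = 0")
          case True then show ?thesis by simp
        next
          case False
          then obtain j where "(k - 1) * l + j < r" using A(4) by auto
          then have "(k - 1) * l < Suc D * l" using Dl by linarith
          then have "k - 1 < Suc D" using mult_less_cancel2 by blast
          then show ?thesis by simp
        qed
        have "k = D \<or> k = Suc D" using kD kD1 by linarith
        then show ?thesis using qeq A(2) True by (auto simp: Gs_def simp del: power_Suc)
      qed
    qed
  qed
qed

end

lemma card4: "card {a, b, c, d :: real} \<le> 4"
  by (intro card_insert_le_m1) (auto intro: card_insert_le_m1)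

lemma set_take_nth: "N \<le> length xs \<Longrightarrow> set (take N xs) = (\<lambda>k. xs ! (k - 1)) ` {1..N}"
proof -
  assume N: "N \<le> length xs"
  have "set (take N xs) = {xs ! i | i. i < N}"
  proof
    show "set (take N xs) \<subseteq> {xs ! i | i. i < N}"
    proof
      fix x assume "x \<in> set (take N xs)"
      then obtain i where "i < length (take N xs)" "x = take N xs ! i" by (auto simp: in_set_conv_nth)
      then show "x \<in> {xs ! i | i. i < N}" by auto
    qed
    show "{xs ! i | i. i < N} \<subseteq> set (take N xs)"
    proof
      fix x assume "x \<in> {xs ! i | i. i < N}"
      then obtain i where i: "i < N" "x = xs ! i" by blast
      then have "x = take N xs ! i" by simp
      moreover have "i < length (take N xs)" using i N by simp
      ultimately show "x \<in> set (take N xs)" by (simp only: nth_mem)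
    qed
  qed
  also have "\<dots> = (\<lambda>k. xs ! (k - 1)) ` {1..N}"
  proof
    show "{xs ! i | i. i < N} \<subseteq> (\<lambda>k. xs ! (k - 1)) ` {1..N}"
      by (auto simp: image_iff intro!: bexI[of _ "Suc i" for i])
    show "(\<lambda>k. xs ! (k - 1)) ` {1..N} \<subseteq> {xs ! i | i. i < N}"
    proof
      fix x assume "x \<in> (\<lambda>k. xs ! (k - 1)) ` {1..N}"
      then obtain k where "k \<in> {1..N}" "x = xs ! (k - 1)" by blast
      then show "x \<in> {xs ! i | i. i < N}" by (intro CollectI exI[of _ "k - 1"]) auto
    qed
  qed
  finally show ?thesis .
qed

lemma LS_gaps:
  assumes "is_LS_sequence y"
  shows "\<exists>G. finite G \<and> card G \<le> 4 \<and> (\<forall>p \<in> y ` {1..N}. \<forall>q \<in> y ` {1..N}. p < q \<longrightarrow>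
           (\<forall>z \<in> y ` {1..N}. \<not> (p < z \<and> z < q)) \<longrightarrow> q - p \<in> G)"
proof (cases "N \<le> 1")
  case True
  have "y ` {1..N} \<subseteq> {y 1}"
  proof
    fix x assume "x \<in> y ` {1..N}"
    then obtain k where "k \<in> {1..N}" "x = y k" by blast
    then have "k = 1" using True by simp
    then show "x \<in> {y 1}" using \<open>x = y k\<close> by simp
  qed
  then have "\<forall>p\<in>y ` {1..N}. \<forall>q\<in>y ` {1..N}. \<not> p < q"
    by (metis insert_subset less_irrefl singletonD subset_eq)
  then show ?thesis by (intro exI[of _ "{}"]) auto
next
  case False
  obtain L S where LS: "L \<ge> 1" "L + S \<ge> 2"
    and yL: "\<forall>n\<ge>1. \<forall>k < LS_t L S n. y (k + 1) = LS_Lambda L S n ! k"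
    using assms unfolding is_LS_sequence_def by blast
  interpret LSloc L S using LS by unfold_locales auto
  have exm: "\<exists>m. N \<le> LS_t L S m" using t_ge[of N] by (intro exI[of _ N]) simp
  define m where "m = (LEAST m. N \<le> LS_t L S m)"
  have m1: "N \<le> LS_t L S m" unfolding m_def using LeastI_ex[OF exm] .
  have m0: "m \<noteq> 0"
  proof
    assume "m = 0" then show False using m1 False t_0 by simp
  qed
  define n where "n = m - 1"
  have mn: "m = Suc n" using m0 unfolding n_def by simp
  have tn: "LS_t L S n < N"
  proof (rule ccontr)
    assume "\<not> LS_t L S n < N"
    then have "m \<le> n" unfolding m_def by (intro Least_le) simp
    then show False using mn by simp
  qed
  have tSn: "N \<le> LS_t L S (Suc n)" using m1 mn by simp
  define r where "r = N - LS_t L S n"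
  have Y: "y ` {1..N} = Yset n r"
  proof -
    have "y ` {1..N} = (\<lambda>k. Lam (Suc n) ! (k - 1)) ` {1..N}"
    proof (rule image_cong[OF refl])
      fix k assume k: "k \<in> {1..N}"
      then have "1 \<le> k" "k \<le> N" by auto
      then have "k - 1 < LS_t L S (Suc n)" using tSn by linarith
      moreover have "Suc n \<ge> 1" by simp
      ultimately have "y (k - 1 + 1) = LS_Lambda L S (Suc n) ! (k - 1)" using yL by blast
      then show "y k = Lam (Suc n) ! (k - 1)" using k LS_Lambda_eq by simp
    qed
    also have "\<dots> = set (take N (Lam (Suc n)))"
    proof -
      have "N \<le> length (Lam (Suc n))" using tSn len_Lam[of "Suc n"] by linarith
      from set_take_nth[OF this] show ?thesis by (rule sym)
    qed
    also have "\<dots> = Yset n r"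
      unfolding Lam_Suc' Yset_def r_def using len_Lam[of n] tn by simp
    finally show ?thesis .
  qed
  have rle: "r \<le> (L + S - 1) * LS_l L S n" using tSn t_Suc[of n] unfolding r_def by simp
  show ?thesis
  proof (intro exI[of _ "Gs n (r div LS_l L S n)"] conjI)
    show "finite (Gs n (r div LS_l L S n))" by (simp add: Gs_def)
    show "card (Gs n (r div LS_l L S n)) \<le> 4" unfolding Gs_def by (rule card4)
    show "\<forall>p\<in>y ` {1..N}. \<forall>q\<in>y ` {1..N}. p < q \<longrightarrow> (\<forall>z\<in>y ` {1..N}. \<not> (p < z \<and> z < q))
       \<longrightarrow> q - p \<in> Gs n (r div LS_l L S n)"
      unfolding Y using gap_lemma[OF rle] by blast
  qed
qed

fun sig :: "real \<Rightarrow> nat \<Rightarrow> real" where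
  "sig k 0 = 4 / k + 1"
| "sig k (Suc j) = k ^ 2 / (64 * real ((nat \<lfloor>(4 / k) / sig k j\<rfloor> + 1) ^ 4))"

definition Bc :: "real \<Rightarrow> nat \<Rightarrow> nat" where "Bc k j = nat \<lfloor>(4 / k) / sig k j\<rfloor>"
definition Kc :: "real \<Rightarrow> nat \<Rightarrow> nat" where "Kc k j = (Bc k j + 1) ^ 4"
definition eta :: "real \<Rightarrow> nat \<Rightarrow> real" where "eta k j = k / (16 * real (Kc k j))"

lemma Kc_pos: "1 \<le> Kc k j" unfolding Kc_def by simp

lemma sig_Suc: "sig k (Suc j) = k * eta k j / 4"
  by (simp add: eta_def Kc_def Bc_def power2_eq_square)

lemma eta_pos: "0 < k \<Longrightarrow> 0 < eta k j"
  using Kc_pos[of k j] by (simp add: eta_def)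

lemma sig_pos: "0 < k \<Longrightarrow> 0 < sig k j"
proof (cases j)
  case 0
  assume k: "0 < k"
  have "0 < 4 / k" using k by simp
  moreover have "sig k j = 4 / k + 1" using 0 by simp
  ultimately show ?thesis by linarith
next
  case (Suc i)
  assume k: "0 < k"
  then show ?thesis using Suc eta_pos[OF k, of i] k by (simp add: sig_Suc)
qed

lemma Kc_gt: "0 < k \<Longrightarrow> (4 / k) / sig k j < real (Kc k j)"
proof -
  assume k: "0 < k"
  have "(4 / k) / sig k j < real (Bc k j) + 1"
  proof -
    have "0 \<le> (4 / k) / sig k j" using k sig_pos[OF k, of j] by simp
    then have "real (Bc k j) = real_of_int \<lfloor>(4 / k) / sig k j\<rfloor>" unfolding Bc_def by simp
    then show ?thesis by linarith
  qed
  also have "\<dots> \<le> (real (Bc k j) + 1) ^ 4" by (rule self_le_power) auto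
  also have "\<dots> = real (Kc k j)" unfolding Kc_def by (simp add: add.commute)
  finally show ?thesis .
qed

lemma sig_dec:
  assumes "0 < k" "k \<le> 1"
  shows "sig k (Suc j) < sig k j"
proof -
  have s: "0 < sig k j" using sig_pos[OF assms(1)] .
  have K: "(4 / k) / sig k j < real (Kc k j)" using Kc_gt[OF assms(1)] .
  have "sig k (Suc j) = k ^ 2 / (64 * real (Kc k j))"
    by (simp add: Kc_def Bc_def)
  also have "\<dots> < k ^ 3 * sig k j / 256"
  proof -
    have Kp: "0 < real (Kc k j)" using Kc_pos[of k j] by simp
    have "4 < real (Kc k j) * (k * sig k j)"
      using K s assms(1) by (simp add: field_simps)
    then have pos: "0 < k ^ 2 * (k * sig k j * real (Kc k j) - 4) / (256 * real (Kc k j))"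
      using Kp assms(1) by (intro divide_pos_pos mult_pos_pos) (auto simp: algebra_simps)
    have "k ^ 3 * sig k j / 256 - k ^ 2 / (64 * real (Kc k j))
        = k ^ 2 * (k * sig k j * real (Kc k j) - 4) / (256 * real (Kc k j))"
      using Kp by (simp add: field_simps power3_eq_cube power2_eq_square)
    then show ?thesis using pos by linarith
  qed
  also have "\<dots> \<le> sig k j"
  proof -
    have "k ^ 3 \<le> 1" using assms by (simp add: power_le_one)
    then have "k ^ 3 * sig k j \<le> 1 * sig k j" using s by (intro mult_right_mono) auto
    then have "k ^ 3 * sig k j / 256 \<le> sig k j / 256" by (intro divide_right_mono) auto
    then show ?thesis using s by linarith
  qed
  finally show ?thesis .
qed

lemma sig_antimono:
  assumes "0 < k" "k \<le> 1" "i \<le> j"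
  shows "sig k j \<le> sig k i"
  using assms(3)
proof (induction j)
  case 0 then show ?case by simp
next
  case (Suc j)
  then show ?case using sig_dec[OF assms(1,2), of j] by (cases "i = Suc j") auto
qed

lemma level_exists:
  assumes k: "0 < k" "k \<le> 1" and NG: "finite NG" "card NG \<le> 4"
  shows "\<exists>j \<le> 4. \<forall>v \<in> NG. v < sig k (Suc j) \<or> sig k j \<le> v"
proof (rule ccontr)
  assume neg: "\<not> ?thesis"
  have ex: "\<forall>j \<le> 4. \<exists>v \<in> NG. sig k (Suc j) \<le> v \<and> v < sig k j"
  proof (intro allI impI)
    fix j :: nat assume "j \<le> 4"
    then have "\<not> (\<forall>v \<in> NG. v < sig k (Suc j) \<or> sig k j \<le> v)" using neg by blast
    then show "\<exists>v \<in> NG. sig k (Suc j) \<le> v \<and> v < sig k j" by (force simp: not_less)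
  qed
  define f where "f j = (SOME v. v \<in> NG \<and> sig k (Suc j) \<le> v \<and> v < sig k j)" for j
  have f: "f j \<in> NG \<and> sig k (Suc j) \<le> f j \<and> f j < sig k j" if "j \<le> 4" for j
  proof -
    have "\<exists>v. v \<in> NG \<and> sig k (Suc j) \<le> v \<and> v < sig k j" using ex that by blast
    then show ?thesis unfolding f_def by (rule someI_ex)
  qed
  have inj: "inj_on f {0..4}"
  proof (rule inj_onI)
    fix i j assume ij: "i \<in> {0..4}" "j \<in> {0..4}" "f i = f j"
    show "i = j"
    proof (rule ccontr)
      assume "i \<noteq> j"
      then have "i < j \<or> j < i" by linarith
      then show False
      proof
        assume "i < j"
        then have "Suc i \<le> j" by simp
        from sig_antimono[OF k this] have "sig k j \<le> sig k (Suc i)" .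
        then show False using f[of i] f[of j] ij by auto
      next
        assume "j < i"
        then have "Suc j \<le> i" by simp
        from sig_antimono[OF k this] have "sig k i \<le> sig k (Suc j)" .
        then show False using f[of i] f[of j] ij by auto
      qed
    qed
  qed
  have "f ` {0..4} \<subseteq> NG" using f by auto
  then have "card {0..(4::nat)} \<le> card NG" using card_inj_on_le[OF inj _ NG(1)] by simp
  then show False using NG(2) by simp
qed

lemma pigeon:
  assumes "finite A" "finite V" "f ` A \<subseteq> V" "card V \<le> K"
  shows "\<exists>v. card A \<le> K * card {a \<in> A. f a = v}"
proof (rule ccontr)
  assume neg: "\<not> ?thesis"
  have lt: "K * card {a \<in> A. f a = v} < card A" for v using neg not_le by blast
  have "card A = (\<Sum>v\<in>V. card {a \<in> A. f a = v})"
  proof -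
    have "card A = (\<Sum>a\<in>A. 1::nat)" by simp
    also have "\<dots> = (\<Sum>v\<in>V. \<Sum>a\<in>{a \<in> A. f a = v}. 1)"
      by (rule sum.group[symmetric]) (use assms in auto)
    finally show ?thesis by simp
  qed
  also have "K * \<dots> = (\<Sum>v\<in>V. K * card {a \<in> A. f a = v})" by (simp add: sum_distrib_left)
  finally have eq: "K * card A = (\<Sum>v\<in>V. K * card {a \<in> A. f a = v})" by simp
  show False
  proof (cases "V = {}")
    case True
    then have "A = {}" using assms(3) by auto
    then show False using lt[of undefined] by simp
  next
    case False
    have "(\<Sum>v\<in>V. K * card {a \<in> A. f a = v}) < (\<Sum>v\<in>V. card A)"
      using False assms(2) lt by (intro sum_strict_mono) auto
    also have "\<dots> = card V * card A" by simp
    also have "\<dots> \<le> K * card A" using assms(4) by simp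
    finally show False using eq by simp
  qed
qed

lemma values_card:
  assumes "finite W"
  shows "card ((\<lambda>c. \<Sum>v\<in>W. v * real (c v)) ` (PiE W (\<lambda>_. {0..B}))) \<le> (B + 1) ^ card W"
proof -
  have "card ((\<lambda>c. \<Sum>v\<in>W. v * real (c v)) ` (PiE W (\<lambda>_. {0..B}))) \<le> card (PiE W (\<lambda>_. {0..B::nat}))"
    by (rule card_image_le) (simp add: assms finite_PiE)
  also have "\<dots> = (B + 1) ^ card W" using assms by (simp add: card_PiE)
  finally show ?thesis .
qed

lemma dist_int_neg:
  assumes "0 < w" "w \<le> 1 / 2"
  shows "dist_int (- w) = w"
proof -
  have f: "\<lfloor>- w\<rfloor> = -1" using assms by (simp add: floor_eq_iff)
  have c: "\<lceil>- w\<rceil> = 0" using assms by (simp add: ceiling_eq_iff)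
  show ?thesis unfolding dist_int_def f c using assms by simp
qed

lemma dist_int_nonneg: "0 \<le> dist_int w"
  unfolding dist_int_def by (simp add: ceiling_correct)

lemma pc_nonneg: "0 \<le> pair_corr x s N"
  unfolding pair_corr_def by simp

lemma pc_diff:
  assumes N: "0 < N" and s: "s0 \<le> s1"
    and Pr: "Pr \<subseteq> {1..N} \<times> {1..N}"
    and Prp: "\<And>l m. (l, m) \<in> Pr \<Longrightarrow> l \<noteq> m \<and> s0 / real N < dist_int (x l - x m) \<and> dist_int (x l - x m) \<le> s1 / real N"
  shows "real (card Pr) / real N \<le> pair_corr x s1 N - pair_corr x s0 N"
proof -
  define A where "A s = {(l, m). l \<in> {1..N} \<and> m \<in> {1..N} \<and> l \<noteq> m \<and> dist_int (x l - x m) \<le> s / real N}" for s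
  have finA: "finite (A s)" for s
    by (rule finite_subset[of _ "{1..N} \<times> {1..N}"]) (auto simp: A_def)
  have sub: "A s0 \<subseteq> A s1"
  proof -
    have "s0 / real N \<le> s1 / real N" using s N by (simp add: divide_right_mono)
    then show ?thesis unfolding A_def by auto
  qed
  have PrA: "Pr \<subseteq> A s1 - A s0"
    using Pr Prp unfolding A_def by fastforce
  have "card Pr \<le> card (A s1 - A s0)" by (rule card_mono) (use finA PrA in auto)
  also have "card (A s1 - A s0) = card (A s1) - card (A s0)" using card_Diff_subset[OF finA sub] .
  finally have c: "real (card Pr) \<le> real (card (A s1)) - real (card (A s0))"
    using card_mono[OF finA sub] by linarith
  have "pair_corr x s1 N - pair_corr x s0 N = (real (card (A s1)) - real (card (A s0))) / real N"
    unfolding pair_corr_def A_def by (simp add: diff_divide_distrib)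
  then show ?thesis using c N by (simp add: divide_right_mono)
qed

lemma enum_set:
  fixes A :: "'a::linorder set"
  assumes "finite A"
  shows "\<exists>e. A = e ` {..<card A} \<and> (\<forall>i j. i < j \<and> j < card A \<longrightarrow> e i < e j)"
proof -
  define ys where "ys = sorted_list_of_set A"
  have s: "sorted_wrt (<) ys" unfolding ys_def by (rule strict_sorted_list_of_set)
  have st: "set ys = A" unfolding ys_def using assms by simp
  have len: "length ys = card A" unfolding ys_def by simp
  have "A = (\<lambda>i. ys ! i) ` {..<card A}" using st len by (auto simp: set_conv_nth)
  moreover have "\<forall>i j. i < j \<and> j < card A \<longrightarrow> ys ! i < ys ! j"
    using sorted_wrt_nth_less[OF s] len by auto
  ultimately show ?thesis by blast
qed

lemma strict_mono_le:
  fixes e :: "nat \<Rightarrow> 'a::linorder"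
  assumes "\<forall>i j. i < j \<and> j < M \<longrightarrow> e i < e j" "i < M" "j < M" "e i \<le> e j"
  shows "i \<le> j"
proof (rule ccontr)
  assume "\<not> i \<le> j"
  then have "e j < e i" using assms(1,2) by auto
  then show False using assms(4) by simp
qed

lemma strict_mono_inj:
  fixes e :: "nat \<Rightarrow> 'a::linorder"
  assumes "\<forall>i j. i < j \<and> j < M \<longrightarrow> e i < e j" "i < M" "j < M" "e i = e j"
  shows "i = j"
  using strict_mono_le[OF assms(1,2,3)] strict_mono_le[OF assms(1,3,2)] assms(4) by simp

lemma partB:
  fixes x :: "nat \<Rightarrow> real" and Y G :: "real set" and \<kappa> :: real and N :: nat
  assumes k: "0 < \<kappa>" "\<kappa> \<le> 1"
    and x01: "\<forall>n\<ge>1. 0 \<le> x n \<and> x n < 1"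
    and Nbig: "8 / \<kappa> \<le> real N" "2 * (4 / \<kappa> + 1) \<le> real N"
    and Yfin: "finite Y" "card Y \<le> N"
    and Gfin: "finite G" "card G \<le> 4"
    and gaps: "\<forall>p\<in>Y. \<forall>q\<in>Y. p < q \<longrightarrow> (\<forall>z\<in>Y. \<not> (p < z \<and> z < q)) \<longrightarrow> q - p \<in> G"
    and Cbig: "\<kappa> * real N \<le> real (card (x ` {1..N} \<inter> Y))"
  shows "\<exists>j\<le>4. \<exists>m \<le> nat \<lfloor>(4 / \<kappa>) / (eta \<kappa> j / 4)\<rfloor>.
           4 * eta \<kappa> j \<le> pair_corr x ((real m + 5) * (eta \<kappa> j / 4)) N
                          - pair_corr x ((real m - 1) * (eta \<kappa> j / 4)) N"
proof -
  define T where "T = 4 / \<kappa>"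
  define C where "C = x ` {1..N} \<inter> Y"
  have Tpos: "0 < T" using k unfolding T_def by simp
  have Npos: "0 < N"
  proof -
    have "0 < 8 / \<kappa>" using k by simp
    then have "0 < real N" using Nbig(1) by linarith
    then show ?thesis by simp
  qed
  have T2: "2 * T \<le> real N" using Nbig(2) unfolding T_def by simp
  define M where "M = card Y"
  obtain ys where ysY: "Y = ys ` {..<M}" and ysm: "\<forall>i j. i < j \<and> j < M \<longrightarrow> ys i < ys j"
    using enum_set[OF Yfin(1)] unfolding M_def by blast
  have MN: "M \<le> N" using Yfin(2) unfolding M_def .
  define I where "I = {i. i < M \<and> ys i \<in> C}"
  have CY: "C \<subseteq> Y" unfolding C_def by simp
  have ysI: "ys ` I = C" using CY ysY unfolding I_def by auto
  have injI: "inj_on ys I"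
    by (rule inj_onI) (use strict_mono_inj[OF ysm] in \<open>auto simp: I_def\<close>)
  have finI: "finite I" unfolding I_def by simp
  have cardI: "card I = card C" using card_image[OF injI] ysI by simp
  define r where "r = card I"
  obtain es where esI: "I = es ` {..<r}" and esm: "\<forall>i j. i < j \<and> j < r \<longrightarrow> es i < es j"
    using enum_set[OF finI] unfolding r_def by blast
  have es_in: "es k < M \<and> ys (es k) \<in> C" if "k < r" for k
    using that esI unfolding I_def by auto
  define u where "u k = ys (es k)" for k
  have uC: "u k \<in> C" if "k < r" for k using es_in[OF that] unfolding u_def by simp
  have u01: "0 \<le> u k \<and> u k < 1" if kr: "k < r" for k
  proof -
    obtain l where "l \<in> {1..N}" "u k = x l" using uC[OF kr] unfolding C_def by auto
    then show ?thesis using x01 by auto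
  qed
  have rge: "\<kappa> * real N \<le> real r" using Cbig cardI unfolding r_def C_def by simp
  have kN8: "8 \<le> \<kappa> * real N" using Nbig(1) k by (simp add: field_simps)
  have r1: "1 \<le> r" using rge kN8 by linarith
  define g where "g i = real N * (ys (Suc i) - ys i)" for i
  have consec: "ys (Suc i) - ys i \<in> G" if "Suc i < M" for i
  proof -
    have p: "ys i \<in> Y" "ys (Suc i) \<in> Y" using that ysY by auto
    have lt: "ys i < ys (Suc i)" using ysm that by auto
    have "\<forall>z\<in>Y. \<not> (ys i < z \<and> z < ys (Suc i))"
    proof
      fix z assume "z \<in> Y"
      then obtain t where t: "t < M" "z = ys t" using ysY by auto
      show "\<not> (ys i < z \<and> z < ys (Suc i))"
      proof
        assume a: "ys i < z \<and> z < ys (Suc i)"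
        have "i \<le> t" using strict_mono_le[OF ysm, of i t] t a that by auto
        moreover have "t \<le> Suc i" using strict_mono_le[OF ysm, of t "Suc i"] t a that by auto
        moreover have "t \<noteq> i" "t \<noteq> Suc i" using a t by auto
        ultimately show False by linarith
      qed
    qed
    then show ?thesis using gaps p lt by blast
  qed
  define NG where "NG = (\<lambda>t. real N * t) ` G"
  have NGfin: "finite NG" "card NG \<le> 4"
    unfolding NG_def using Gfin card_image_le[OF Gfin(1), of "\<lambda>t. real N * t"] by auto
  have gNG: "g i \<in> NG" if "Suc i < M" for i
    using consec[OF that] unfolding g_def NG_def by auto
  have gpos: "0 < g i" if "Suc i < M" for i
    using ysm that Npos unfolding g_def by auto
  obtain j0 where j0: "j0 \<le> 4" and lev: "\<forall>v \<in> NG. v < sig \<kappa> (Suc j0) \<or> sig \<kappa> j0 \<le> v"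
    using level_exists[OF k NGfin] by blast
  define \<sigma> where "\<sigma> = sig \<kappa> j0"
  define \<theta> where "\<theta> = sig \<kappa> (Suc j0)"
  define \<eta> where "\<eta> = eta \<kappa> j0"
  define K where "K = Kc \<kappa> j0"
  define B where "B = Bc \<kappa> j0"
  define \<epsilon> where "\<epsilon> = \<eta> / 4"
  have \<theta>\<eta>: "\<theta> = \<kappa> * \<eta> / 4" unfolding \<theta>_def \<eta>_def by (simp add: sig_Suc del: sig.simps)
  have \<theta>\<sigma>: "\<theta> < \<sigma>" unfolding \<theta>_def \<sigma>_def using sig_dec[OF k] .
  have \<eta>pos: "0 < \<eta>" unfolding \<eta>_def using eta_pos[OF k(1)] .
  have \<theta>pos: "0 < \<theta>" using \<theta>\<eta> mult_pos_pos[OF k(1) \<eta>pos] by simp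
  have \<sigma>pos: "0 < \<sigma>" using \<theta>pos \<theta>\<sigma> by simp
  have Kpos: "1 \<le> K" unfolding K_def by (rule Kc_pos)
  have KB: "K = (B + 1) ^ 4" unfolding K_def B_def Kc_def ..
  have \<eta>K: "\<eta> = \<kappa> / (16 * real K)" unfolding \<eta>_def K_def eta_def ..
  have gsplit: "g i < \<theta> \<or> \<sigma> \<le> g i" if "Suc i < M" for i
    using lev gNG[OF that] unfolding \<theta>_def \<sigma>_def by blast
  define P where "P = {..<r - 1}"
  have inP: "Suc k < r" if "k \<in> P" for k using that r1 unfolding P_def by auto
  define R where "R k = {es k..<es (Suc k)}" for k
  have esle: "es k < es (Suc k)" if "k \<in> P" for k using esm inP[OF that] by auto
  have Rsub: "Suc i < M" if "k \<in> P" "i \<in> R k" for k i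
    using that es_in[OF inP[OF that(1)]] unfolding R_def by auto
  define d where "d k = real N * (u (Suc k) - u k)" for k
  have dsum: "d k = (\<Sum>i\<in>R k. g i)" if "k \<in> P" for k
  proof -
    have "(\<Sum>i\<in>R k. g i) = (\<Sum>i = es k..<es (Suc k). real N * ys (Suc i) - real N * ys i)"
      unfolding R_def g_def by (simp add: algebra_simps)
    also have "\<dots> = real N * ys (es (Suc k)) - real N * ys (es k)"
      using sum_Suc_diff'[of "es k" "es (Suc k)" "\<lambda>i. real N * ys i"] esle[OF that] by simp
    finally show ?thesis unfolding d_def u_def by (simp add: algebra_simps)
  qed
  define ts where "ts k = (\<Sum>i\<in>{i\<in>R k. g i < \<theta>}. g i)" for k
  define bs where "bs k = (\<Sum>i\<in>{i\<in>R k. \<sigma> \<le> g i}. g i)" for k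
  have dsplit: "d k = ts k + bs k" if kP: "k \<in> P" for k
  proof -
    have fin: "finite (R k)" unfolding R_def by simp
    have iff: "(\<not> g i < \<theta>) = (\<sigma> \<le> g i)" if "i \<in> R k" for i
      using gsplit[OF Rsub[OF kP that]] \<theta>\<sigma> by linarith
    have "R k - {i\<in>R k. g i < \<theta>} = {i\<in>R k. \<sigma> \<le> g i}"
      using iff by blast
    then show ?thesis unfolding dsum[OF that] ts_def bs_def
      using sum.subset_diff[of "{i\<in>R k. g i < \<theta>}" "R k" g] fin by simp
  qed
  have tsnn: "0 \<le> ts k" if "k \<in> P" for k
    unfolding ts_def using gpos Rsub[OF that] by (intro sum_nonneg) (auto intro: less_imp_le)
  have bsnn: "0 \<le> bs k" if "k \<in> P" for k
    unfolding bs_def using gpos Rsub[OF that] by (intro sum_nonneg) (auto intro: less_imp_le)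
  have dpos: "0 < d k" if "k \<in> P" for k
    using ysm es_in[OF inP[OF that]] esle[OF that] Npos inP[OF that] unfolding d_def u_def by auto
  have dtot: "(\<Sum>k\<in>P. d k) \<le> real N"
  proof -
    have "(\<Sum>k\<in>P. d k) = (\<Sum>k<r - 1. real N * u (Suc k) - real N * u k)"
      unfolding P_def d_def by (simp add: algebra_simps)
    also have "\<dots> = real N * u (r - 1) - real N * u 0"
      by (rule sum_lessThan_telescope)
    also have "\<dots> = real N * (u (r - 1) - u 0)" by (simp add: algebra_simps)
    also have "\<dots> \<le> real N * 1"
      using u01[of "r - 1"] u01[of 0] r1 by (intro mult_left_mono) auto
    finally show ?thesis by simp
  qed
  define bad1 where "bad1 = {k\<in>P. T < d k}"
  have card_bad1: "real (card bad1) \<le> \<kappa> * real N / 4"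
  proof -
    have "T * real (card bad1) = (\<Sum>k\<in>bad1. T)" by simp
    also have "\<dots> \<le> (\<Sum>k\<in>bad1. d k)" unfolding bad1_def by (intro sum_mono) auto
    also have "\<dots> \<le> (\<Sum>k\<in>P. d k)"
      unfolding bad1_def using dpos by (intro sum_mono2) (auto simp: P_def intro: less_imp_le)
    finally have "T * real (card bad1) \<le> real N" using dtot by linarith
    then show ?thesis using Tpos k unfolding T_def by (simp add: field_simps)
  qed
  have etot: "(\<Sum>k\<in>P. real (es (Suc k)) - real (es k)) \<le> real N"
  proof -
    have "(\<Sum>k\<in>P. real (es (Suc k)) - real (es k)) = real (es (r - 1)) - real (es 0)"
      unfolding P_def by (rule sum_lessThan_telescope)
    also have "\<dots> \<le> real M" using es_in[of "r - 1"] r1 by simp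
    finally show ?thesis using MN by linarith
  qed
  define bad2 where "bad2 = {k\<in>P. d k \<le> T \<and> \<eta> \<le> ts k}"
  have card_bad2: "real (card bad2) \<le> \<kappa> * real N / 4"
  proof -
    have each: "\<eta> \<le> \<theta> * (real (es (Suc k)) - real (es k))" if "k \<in> bad2" for k
    proof -
      have kP: "k \<in> P" using that unfolding bad2_def by simp
      have "ts k \<le> (\<Sum>i\<in>{i\<in>R k. g i < \<theta>}. \<theta>)" unfolding ts_def by (intro sum_mono) auto
      also have "\<dots> = \<theta> * real (card {i\<in>R k. g i < \<theta>})" by simp
      also have "\<dots> \<le> \<theta> * real (card (R k))"
      proof -
        have "card {i\<in>R k. g i < \<theta>} \<le> card (R k)" by (rule card_mono) (auto simp: R_def)
        then show ?thesis using \<theta>pos by (intro mult_left_mono) auto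
      qed
      also have "real (card (R k)) = real (es (Suc k)) - real (es k)"
        unfolding R_def using esle[OF kP] by simp
      finally show ?thesis using that unfolding bad2_def by simp
    qed
    have "\<eta> * real (card bad2) = (\<Sum>k\<in>bad2. \<eta>)" by simp
    also have "\<dots> \<le> (\<Sum>k\<in>bad2. \<theta> * (real (es (Suc k)) - real (es k)))" using each by (intro sum_mono) auto
    also have "\<dots> \<le> (\<Sum>k\<in>P. \<theta> * (real (es (Suc k)) - real (es k)))"
    proof (rule sum_mono2)
      show "finite P" unfolding P_def by simp
      show "bad2 \<subseteq> P" unfolding bad2_def by auto
      fix b assume "b \<in> P - bad2"
      then have "es b < es (Suc b)" using esle by auto
      then show "0 \<le> \<theta> * (real (es (Suc b)) - real (es b))" using \<theta>pos by simp
    qed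
    also have "\<dots> = \<theta> * (\<Sum>k\<in>P. real (es (Suc k)) - real (es k))" by (simp add: sum_distrib_left)
    also have "\<dots> \<le> \<theta> * real N" using etot \<theta>pos by (intro mult_left_mono) auto
    finally have "\<eta> * real (card bad2) \<le> \<kappa> * \<eta> / 4 * real N" using \<theta>\<eta> by simp
    then show ?thesis using \<eta>pos by (simp add: field_simps)
  qed
  define good where "good = {k\<in>P. d k \<le> T \<and> ts k < \<eta>}"
  have card_good: "\<kappa> * real N / 4 \<le> real (card good)"
  proof -
    have "P \<subseteq> good \<union> bad1 \<union> bad2" unfolding good_def bad1_def bad2_def by auto
    then have "card P \<le> card (good \<union> bad1 \<union> bad2)" by (intro card_mono) (auto simp: P_def good_def bad1_def bad2_def)
    also have "\<dots> \<le> card good + card bad1 + card bad2"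
      using card_Un_le[of "good \<union> bad1" bad2] card_Un_le[of good bad1] by linarith
    finally have "real (card P) \<le> real (card good) + real (card bad1) + real (card bad2)" by linarith
    moreover have "real (card P) = real r - 1" unfolding P_def using r1 by simp
    ultimately show ?thesis using card_bad1 card_bad2 rge kN8 by linarith
  qed
  define NGb where "NGb = {v\<in>NG. \<sigma> \<le> v}"
  have NGbfin: "finite NGb" "card NGb \<le> 4"
    using NGfin card_mono[OF NGfin(1), of NGb] unfolding NGb_def by auto
  define cnt where "cnt k v = card {i\<in>R k. g i = v}" for k v
  have bs_eq: "bs k = (\<Sum>v\<in>NGb. v * real (cnt k v))" if "k \<in> P" for k
  proof -
    have fin: "finite {i\<in>R k. \<sigma> \<le> g i}" unfolding R_def by simp
    have sub: "g ` {i\<in>R k. \<sigma> \<le> g i} \<subseteq> NGb" using gNG Rsub[OF that] unfolding NGb_def by auto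
    have "bs k = (\<Sum>v\<in>NGb. \<Sum>i\<in>{i \<in> {i\<in>R k. \<sigma> \<le> g i}. g i = v}. g i)"
      unfolding bs_def using sum.group[OF fin NGbfin(1) sub, of g] by simp
    also have "\<dots> = (\<Sum>v\<in>NGb. v * real (cnt k v))"
    proof (rule sum.cong[OF refl])
      fix v assume v: "v \<in> NGb"
      have e: "{i \<in> {i\<in>R k. \<sigma> \<le> g i}. g i = v} = {i\<in>R k. g i = v}" using v unfolding NGb_def by auto
      show "(\<Sum>i\<in>{i \<in> {i\<in>R k. \<sigma> \<le> g i}. g i = v}. g i) = v * real (cnt k v)"
        unfolding e cnt_def by simp
    qed
    finally show ?thesis .
  qed
  have cnt_le: "cnt k v \<le> B" if "k \<in> good" "v \<in> NGb" for k v
  proof -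
    have kP: "k \<in> P" using that unfolding good_def by simp
    have vs: "\<sigma> \<le> v" using that unfolding NGb_def by simp
    have "v * real (cnt k v) = (\<Sum>i\<in>{i\<in>R k. g i = v}. g i)" unfolding cnt_def by simp
    also have "\<dots> \<le> bs k" unfolding bs_def using vs gpos Rsub[OF kP]
      by (intro sum_mono2) (auto simp: R_def intro: less_imp_le)
    also have "\<dots> \<le> d k" using dsplit[OF kP] tsnn[OF kP] by simp
    also have "\<dots> \<le> T" using that unfolding good_def by simp
    finally have "v * real (cnt k v) \<le> T" .
    moreover have "\<sigma> * real (cnt k v) \<le> v * real (cnt k v)" using vs by (intro mult_right_mono) auto
    ultimately have "\<sigma> * real (cnt k v) \<le> T" by linarith
    then have "real (cnt k v) \<le> T / \<sigma>" using \<sigma>pos by (simp add: field_simps)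
    then have "int (cnt k v) \<le> \<lfloor>T / \<sigma>\<rfloor>" by (simp add: le_floor_iff)
    then show ?thesis unfolding B_def Bc_def \<sigma>_def T_def by linarith
  qed
  define V where "V = (\<lambda>c. \<Sum>v\<in>NGb. v * real (c v)) ` (PiE NGb (\<lambda>_. {0..B}))"
  have bsV: "bs ` good \<subseteq> V"
  proof
    fix y assume "y \<in> bs ` good"
    then obtain k where kg: "k \<in> good" "y = bs k" by blast
    have kP: "k \<in> P" using kg unfolding good_def by simp
    have mem: "restrict (cnt k) NGb \<in> PiE NGb (\<lambda>_. {0..B})" using cnt_le[OF kg(1)] by auto
    have "y = (\<Sum>v\<in>NGb. v * real (restrict (cnt k) NGb v))" using bs_eq[OF kP] kg by simp
    then show "y \<in> V" unfolding V_def using mem by blast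
  qed
  have cardV: "card V \<le> K"
  proof -
    have "card V \<le> (B + 1) ^ card NGb" unfolding V_def by (rule values_card[OF NGbfin(1)])
    also have "\<dots> \<le> (B + 1) ^ 4" using NGbfin(2) by (intro power_increasing) auto
    finally show ?thesis using KB by simp
  qed
  have finV: "finite V" unfolding V_def using NGbfin(1) by (simp add: finite_PiE)
  have fing: "finite good" unfolding good_def P_def by simp
  obtain D where D: "card good \<le> K * card {k\<in>good. bs k = D}"
    using pigeon[OF fing finV bsV cardV] by blast
  define Q where "Q = {k\<in>good. bs k = D}"
  have cardQ: "\<kappa> * real N / 4 \<le> real K * real (card Q)"
  proof -
    have "real (card good) \<le> real (K * card Q)" using D unfolding Q_def by (simp only: of_nat_le_iff)
    then show ?thesis using card_good by simp
  qed
  have Qne: "Q \<noteq> {}"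
  proof
    assume "Q = {}"
    then show False using cardQ kN8 by simp
  qed
  obtain k0 where k0: "k0 \<in> Q" using Qne by blast
  have k0P: "k0 \<in> P" using k0 unfolding Q_def good_def by simp
  have D0: "0 \<le> D" "D \<le> T"
  proof -
    have "D = bs k0" using k0 unfolding Q_def by simp
    then show "0 \<le> D" "D \<le> T" using bsnn[OF k0P] dsplit[OF k0P] tsnn[OF k0P] k0
      unfolding Q_def good_def by auto
  qed
  have \<epsilon>pos: "0 < \<epsilon>" unfolding \<epsilon>_def using \<eta>pos by simp
  define m where "m = nat \<lfloor>D / \<epsilon>\<rfloor>"
  have mfl: "real m \<le> D / \<epsilon>" "D / \<epsilon> < real m + 1"
  proof -
    have "0 \<le> D / \<epsilon>" using D0 \<epsilon>pos by simp
    then have "real m = real_of_int \<lfloor>D / \<epsilon>\<rfloor>" unfolding m_def by simp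
    then show "real m \<le> D / \<epsilon>" "D / \<epsilon> < real m + 1" by linarith+
  qed
  have mD: "real m * \<epsilon> \<le> D" "D < (real m + 1) * \<epsilon>"
    using mfl \<epsilon>pos by (simp_all add: field_simps)
  have mle: "m \<le> nat \<lfloor>(4 / \<kappa>) / (eta \<kappa> j0 / 4)\<rfloor>"
  proof -
    have "D / \<epsilon> \<le> T / \<epsilon>" using D0 \<epsilon>pos by (simp add: divide_right_mono)
    then have "\<lfloor>D / \<epsilon>\<rfloor> \<le> \<lfloor>T / \<epsilon>\<rfloor>" by (rule floor_mono)
    then show ?thesis unfolding m_def T_def \<epsilon>_def \<eta>_def by (simp add: nat_mono)
  qed
  define s0 where "s0 = (real m - 1) * \<epsilon>"
  define s1 where "s1 = (real m + 5) * \<epsilon>"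
  have dQ: "s0 < d k \<and> d k \<le> s1 \<and> d k \<le> T" if "k \<in> Q" for k
  proof -
    have kP: "k \<in> P" and kb: "bs k = D" and kt: "ts k < \<eta>" and kT: "d k \<le> T"
      using that unfolding Q_def good_def by auto
    have "d k = ts k + D" using dsplit[OF kP] kb by simp
    then show ?thesis using tsnn[OF kP] kt mD kT \<epsilon>pos unfolding s0_def s1_def \<epsilon>_def
      by (auto simp: algebra_simps)
  qed
  define idx where "idx c = (SOME l. l \<in> {1..N} \<and> x l = c)" for c
  have idx: "idx c \<in> {1..N} \<and> x (idx c) = c" if "c \<in> C" for c
  proof -
    have "\<exists>l. l \<in> {1..N} \<and> x l = c" using that unfolding C_def by auto
    then show ?thesis unfolding idx_def by (rule someI_ex)
  qed
  define Pr where "Pr = (\<lambda>k. (idx (u k), idx (u (Suc k)))) ` Q"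
  have QP: "k \<in> P" if "k \<in> Q" for k using that unfolding Q_def good_def by simp
  have injQ: "inj_on (\<lambda>k. (idx (u k), idx (u (Suc k)))) Q"
  proof (rule inj_onI)
    fix k k' assume kk: "k \<in> Q" "k' \<in> Q" "(idx (u k), idx (u (Suc k))) = (idx (u k'), idx (u (Suc k')))"
    have r: "k < r" "k' < r" using inP[OF QP[OF kk(1)]] inP[OF QP[OF kk(2)]] by auto
    have i1: "idx (u k) = idx (u k')" using kk(3) by simp
    have "u k = x (idx (u k))" using idx[OF uC[OF r(1)]] by simp
    also have "\<dots> = x (idx (u k'))" using i1 by simp
    also have "\<dots> = u k'" using idx[OF uC[OF r(2)]] by simp
    finally have "ys (es k) = ys (es k')" unfolding u_def .
    then have "es k = es k'" using strict_mono_inj[OF ysm, of "es k" "es k'"] es_in[OF r(1)] es_in[OF r(2)] by simp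
    then show "k = k'" using strict_mono_inj[OF esm, of k k'] r by simp
  qed
  have cardPr: "card Pr = card Q" unfolding Pr_def using card_image[OF injQ] .
  have s01: "s0 \<le> s1" unfolding s0_def s1_def using \<epsilon>pos by simp
  have Prsub: "Pr \<subseteq> {1..N} \<times> {1..N}"
  proof
    fix z assume "z \<in> Pr"
    then obtain k where k: "k \<in> Q" "z = (idx (u k), idx (u (Suc k)))" unfolding Pr_def by blast
    have "k < r" "Suc k < r" using inP[OF QP[OF k(1)]] by auto
    then show "z \<in> {1..N} \<times> {1..N}" using idx[OF uC] k(2) by auto
  qed
  have Prp: "l \<noteq> m' \<and> s0 / real N < dist_int (x l - x m') \<and> dist_int (x l - x m') \<le> s1 / real N"
    if lm: "(l, m') \<in> Pr" for l m'
  proof -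
    obtain k where k: "k \<in> Q" "l = idx (u k)" "m' = idx (u (Suc k))" using lm unfolding Pr_def by blast
    have kr: "k < r" "Suc k < r" using inP[OF QP[OF k(1)]] by auto
    have xl: "x l = u k" "x m' = u (Suc k)" using idx[OF uC[OF kr(1)]] idx[OF uC[OF kr(2)]] k by auto
    have dk: "s0 < d k" "d k \<le> s1" "d k \<le> T" using dQ[OF k(1)] by auto
    have dkp: "0 < d k" using dpos[OF QP[OF k(1)]] .
    have w: "0 < d k / real N" "d k / real N \<le> 1 / 2"
      using dkp Npos dk(3) T2 by (auto simp: field_simps)
    have "x l - x m' = - (d k / real N)" unfolding xl d_def using Npos by (simp add: field_simps)
    then have dist: "dist_int (x l - x m') = d k / real N" using dist_int_neg[OF w] by simp
    have "l \<noteq> m'"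
    proof
      assume "l = m'"
      then have "x l - x m' = 0" by simp
      moreover have "dist_int 0 = 0" by (simp add: dist_int_def)
      ultimately have "d k / real N = 0" using dist by simp
      then show False using w(1) by linarith
    qed
    then show ?thesis unfolding dist using dk Npos by (simp add: divide_strict_right_mono divide_right_mono)
  qed
  have diff: "real (card Pr) / real N \<le> pair_corr x s1 N - pair_corr x s0 N"
    by (rule pc_diff[OF Npos s01 Prsub Prp]) 
  have "4 * \<eta> \<le> real (card Q) / real N"
  proof -
    have "\<kappa> / 4 \<le> real K * real (card Q) / real N" using cardQ Npos by (simp add: field_simps)
    then have "\<kappa> / (4 * real K) \<le> real (card Q) / real N" using Kpos by (simp add: field_simps)
    then show ?thesis unfolding \<eta>K using Kpos by (simp add: field_simps)
  qed
  then have "4 * \<eta> \<le> pair_corr x s1 N - pair_corr x s0 N" using diff cardPr by simp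
  then have fin: "4 * eta \<kappa> j0 \<le> pair_corr x ((real m + 5) * (eta \<kappa> j0 / 4)) N
                          - pair_corr x ((real m - 1) * (eta \<kappa> j0 / 4)) N"
    unfolding s0_def s1_def \<epsilon>_def \<eta>_def .
  show ?thesis using j0 mle fin by blast
qed

theorem corollary2:
  fixes x :: "nat \<Rightarrow> real"
  assumes "\<forall>n\<ge>1. 0 \<le> x n \<and> x n < 1"
    and "\<exists>\<kappa>::real. \<kappa> > 0 \<and> (\<exists>N :: nat \<Rightarrow> nat. strict_mono N \<and> (\<forall>i. N i > 0) \<and>
          (\<exists>y :: nat \<Rightarrow> nat \<Rightarrow> real. \<forall>i. is_LS_sequence (y i) \<and>
             real (card (x ` {1..N i} \<inter> y i ` {1..N i})) \<ge> \<kappa> * real (N i)))"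
  shows "\<not> poissonian_pair_corr x"
proof
  assume ppc: "poissonian_pair_corr x"
  obtain \<kappa>0 :: real and Ns :: "nat \<Rightarrow> nat" and y :: "nat \<Rightarrow> nat \<Rightarrow> real" where
    k0: "\<kappa>0 > 0" and smN: "strict_mono Ns" and
    yi: "\<And>i. is_LS_sequence (y i)" and
    ci: "\<And>i. real (card (x ` {1..Ns i} \<inter> y i ` {1..Ns i})) \<ge> \<kappa>0 * real (Ns i)"
    using assms(2) by blast
  define \<kappa> where "\<kappa> = min \<kappa>0 1"
  have k: "0 < \<kappa>" "\<kappa> \<le> 1" unfolding \<kappa>_def using k0 by auto
  define \<epsilon> where "\<epsilon> j = eta \<kappa> j / 4" for j
  define Mb where "Mb j = nat \<lfloor>(4 / \<kappa>) / \<epsilon> j\<rfloor>" for j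
  have \<epsilon>pos: "0 < \<epsilon> j" for j unfolding \<epsilon>_def using eta_pos[OF k(1)] by simp
  define A where "A = Sigma {..(4::nat)} (\<lambda>j. {..Mb j + 6})"
  have finA: "finite A" unfolding A_def by (intro finite_SigmaI) auto
  have ev1: "\<forall>\<^sub>F n in sequentially. \<forall>jm\<in>A.
      \<bar>pair_corr x (real (snd jm) * \<epsilon> (fst jm)) n - 2 * (real (snd jm) * \<epsilon> (fst jm))\<bar> < \<epsilon> (fst jm)"
  proof (rule eventually_ball_finite[OF finA], rule ballI)
    fix jm assume "jm \<in> A"
    define s where "s = real (snd jm) * \<epsilon> (fst jm)"
    have s0: "0 \<le> s" unfolding s_def using \<epsilon>pos[of "fst jm"] by (intro mult_nonneg_nonneg) auto
    have "(\<lambda>n. pair_corr x s n) \<longlonglongrightarrow> 2 * s" using ppc s0 unfolding poissonian_pair_corr_def by blast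
    from tendstoD[OF this \<epsilon>pos[of "fst jm"]]
    show "\<forall>\<^sub>F n in sequentially. \<bar>pair_corr x (real (snd jm) * \<epsilon> (fst jm)) n - 2 * (real (snd jm) * \<epsilon> (fst jm))\<bar> < \<epsilon> (fst jm)"
      unfolding s_def dist_real_def .
  qed
  define N0 where "N0 = nat \<lceil>8 / \<kappa> + 2 * (4 / \<kappa> + 1)\<rceil>"
  have ev2: "\<forall>\<^sub>F n in sequentially. N0 \<le> n" by (rule eventually_ge_at_top)
  have lim: "filterlim Ns at_top sequentially" using smN by (rule filterlim_subseq)
  have "\<forall>\<^sub>F i in sequentially. (\<forall>jm\<in>A.
      \<bar>pair_corr x (real (snd jm) * \<epsilon> (fst jm)) (Ns i) - 2 * (real (snd jm) * \<epsilon> (fst jm))\<bar> < \<epsilon> (fst jm))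
      \<and> N0 \<le> Ns i"
    using filterlim_iff[THEN iffD1, OF lim, rule_format, OF eventually_conj[OF ev1 ev2]] by simp
  then obtain i where
    appr: "\<forall>jm\<in>A. \<bar>pair_corr x (real (snd jm) * \<epsilon> (fst jm)) (Ns i) - 2 * (real (snd jm) * \<epsilon> (fst jm))\<bar> < \<epsilon> (fst jm)"
    and Nbig0: "N0 \<le> Ns i"
    by (auto simp: eventually_sequentially)
  define N where "N = Ns i"
  have Nbig: "8 / \<kappa> \<le> real N" "2 * (4 / \<kappa> + 1) \<le> real N"
  proof -
    have "8 / \<kappa> + 2 * (4 / \<kappa> + 1) \<le> real N0" unfolding N0_def by linarith
    moreover have "0 \<le> 8 / \<kappa>" "0 \<le> 2 * (4 / \<kappa> + 1)" using k by auto
    moreover have "real N0 \<le> real N" using Nbig0 unfolding N_def by simp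
    ultimately show "8 / \<kappa> \<le> real N" "2 * (4 / \<kappa> + 1) \<le> real N" by linarith+
  qed
  obtain G where G: "finite G" "card G \<le> 4"
    "\<forall>p \<in> y i ` {1..N}. \<forall>q \<in> y i ` {1..N}. p < q \<longrightarrow>
           (\<forall>z \<in> y i ` {1..N}. \<not> (p < z \<and> z < q)) \<longrightarrow> q - p \<in> G"
    using LS_gaps[OF yi[of i], of N] by blast
  have Yc: "card (y i ` {1..N}) \<le> N" using card_image_le[of "{1..N}" "y i"] by simp
  have Cb: "\<kappa> * real N \<le> real (card (x ` {1..N} \<inter> y i ` {1..N}))"
  proof -
    have "\<kappa> * real N \<le> \<kappa>0 * real N" unfolding \<kappa>_def by (intro mult_right_mono) auto
    then show ?thesis using ci[of i] unfolding N_def by linarith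
  qed
  obtain j m where jm: "j \<le> 4" "m \<le> nat \<lfloor>(4 / \<kappa>) / (eta \<kappa> j / 4)\<rfloor>"
    and big: "4 * eta \<kappa> j \<le> pair_corr x ((real m + 5) * (eta \<kappa> j / 4)) N
                          - pair_corr x ((real m - 1) * (eta \<kappa> j / 4)) N"
    using partB[OF k assms(1) Nbig _ Yc G Cb] by blast
  have mM: "m \<le> Mb j" using jm(2) unfolding Mb_def \<epsilon>_def .
  have e4: "eta \<kappa> j = 4 * \<epsilon> j" unfolding \<epsilon>_def by simp
  have up: "pair_corr x ((real m + 5) * \<epsilon> j) N < 2 * ((real m + 5) * \<epsilon> j) + \<epsilon> j"
  proof -
    have "(j, m + 5) \<in> A" unfolding A_def using jm(1) mM by auto
    then have "\<bar>pair_corr x (real (m + 5) * \<epsilon> j) N - 2 * (real (m + 5) * \<epsilon> j)\<bar> < \<epsilon> j"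
      using appr unfolding N_def by fastforce
    then show ?thesis by simp
  qed
  have lo: "2 * ((real m - 1) * \<epsilon> j) - \<epsilon> j < pair_corr x ((real m - 1) * \<epsilon> j) N"
  proof (cases m)
    case 0
    have "2 * ((real m - 1) * \<epsilon> j) - \<epsilon> j < 0" using 0 \<epsilon>pos[of j] by simp
    then show ?thesis using pc_nonneg[of x "(real m - 1) * \<epsilon> j" N] by linarith
  next
    case (Suc m')
    have "(j, m') \<in> A" unfolding A_def using jm(1) mM Suc by auto
    then have "\<bar>pair_corr x (real m' * \<epsilon> j) N - 2 * (real m' * \<epsilon> j)\<bar> < \<epsilon> j"
      using appr unfolding N_def by fastforce
    moreover have "real m - 1 = real m'" using Suc by simp
    ultimately show ?thesis by simp
  qed
  have "4 * eta \<kappa> j \<le> pair_corr x ((real m + 5) * \<epsilon> j) N - pair_corr x ((real m - 1) * \<epsilon> j) N"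
    using big unfolding \<epsilon>_def .
  then have "16 * \<epsilon> j < 2 * ((real m + 5) * \<epsilon> j) + \<epsilon> j - (2 * ((real m - 1) * \<epsilon> j) - \<epsilon> j)"
    using up lo e4 by linarith
  then show False using \<epsilon>pos[of j] by (simp add: algebra_simps)
qed

end
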